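(* Let $R$ be a localizable partially ordered commutative ring with $\mathbb{N}\subseteq\mathrm{Loc}(R)$. Then $\mathcal{K}(R)$ is a compact Hausdorff space and $\{r\in R : \widehat r\in \mathscr{C}_\approx(\mathcal{D}_{\mathrm{loc}}(R))^+\} = (R^+)^\ddagger$, where $(R^+)^\ddagger=\{g\in R: \text{there is } h\in R \text{ with } kg+h\in R^+ \text{ for all } k\in\mathbb{N}\}$.
   Context: All rings are commutative with unit $1$; ring morphisms are unital. A partially ordered commutative ring is a commutative ring $R$ with a partial order $\le$ such that $r\le s$ implies $r+t\le s+t$, and whose positive cone $R^+=\{r:0\le r\}$ is closed under multiplication and contains all squares. $\mathbb{N}=\{1,2,\dots\}$, $\mathbb{N}_0=\mathbb{N}\cup\{0\}$. $\mathrm{Loc}(R)$ is the set of $s\in 1+R^+$ such that for all $r\in R$, $rs\in R^+$ implies $r\in R^+$; $R$ is localizable if for every $r\in R$ there is $s\in\mathrm{Loc}(R)$ with $-s\le r\le s$. ($\mathbb{N}\subseteq\mathrm{Loc}(R)$ means the elements $n\cdot1$ lie in $\mathrm{Loc}(R)$.) Admissible domains: for a topological space $Y$, an admissible set of domains is a set $\mathcal{D}$ of open subsets of $Y$ with $Y\in\mathcal{D}$, closed under finite intersections. On $\bigcup_{A\in\mathcal{D}}\mathscr{C}(A)$ define $f+g,fg$ pointwise on $\operatorname{dom}f\cap\operatorname{dom}g$; $f\approx g$ iff $f|_A=g|_A$ for some $A\in\mathcal{D}$, $A\subseteq\operatorname{dom}f\cap\operatorname{dom}g$. The quotient $\mathscr{C}_\approx(\mathcal{D})$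 is a partially ordered commutative ring with $[f]\ge 0$ iff $f|_A\ge0$ pointwise for some $A\in\mathcal{D}$, $A\subseteq\operatorname{dom}f$. Localization: $R_{\mathrm{loc}}$ consists of fractions $r/s$ ($r\in R$, $s\in\mathrm{Loc}(R)$), $r/s=r'/s'$ iff $rs'=r's$, usual operations, ordered by $p/q\le r/s$ iff $ps\le rq$. $R^{\mathrm{bd}}_{\mathrm{loc}}=\{a\in R_{\mathrm{loc}}:\exists n\in\mathbb{N}_0,\ -n\le a\le n\}$ (a subring). $\mathcal{K}(R)$ is the set of ring morphisms $\varphi\colon R^{\mathrm{bd}}_{\mathrm{loc}}\to\mathbb{R}$ with $\varphi(a)\ge 0$ whenever $a\ge0$, with the weak-$*$ topology (generated by $\{\varphi:\varphi(a)\in V\}$, $a\in R^{\mathrm{bd}}_{\mathrm{loc}}$, $V\subseteq\mathbb{R}$ open). For $s\in\mathrm{Loc}(R)$, $\mathrm{O}_{s<\infty}=\{\varphi:\varphi(1/s)>0\}$; $\mathcal{D}_{\mathrm{loc}}(R)=\{\mathrm{O}_{s<\infty}:s\in\mathrm{Loc}(R)\}$ is admissible. The extended Gelfand transformation sends $r\in R$ to $\widehat r$, the class of $r_s\colon\mathrm{O}_{s<\infty}\to\mathbb{R}$, $\varphi\mapsto\varphi(1/s)^{-1}\varphi(r/s)$, for any $s\in\mathrm{Loc}(R)$ with $r/s\in R^{\mathrm{bd}}_{\mathrm{loc}}$ (independent of $s$). *)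

theory Defs
  imports "HOL-Analysis.Analysis"
begin

definition po_comm_ring :: "('a::comm_ring_1 \<Rightarrow> 'a \<Rightarrow> bool) \<Rightarrow> bool" where
  "po_comm_ring le \<longleftrightarrow>
     (\<forall>r. le r r) \<and>
     (\<forall>r s. le r s \<and> le s r \<longrightarrow> r = s) \<and>
     (\<forall>r s t. le r s \<and> le s t \<longrightarrow> le r t) \<and>
     (\<forall>r s t. le r s \<longrightarrow> le (r + t) (s + t)) \<and>
     (\<forall>r s. le 0 r \<and> le 0 s \<longrightarrow> le 0 (r * s)) \<and>
     (\<forall>r. le 0 (r * r))"

definition Loc :: "('a::comm_ring_1 \<Rightarrow> 'a \<Rightarrow> bool) \<Rightarrow> 'a set" where
  "Loc le = {s. le 0 (s - 1) \<and> (\<forall>r. le 0 (r * s) \<longrightarrow> le 0 r)}"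

definition localizable :: "('a::comm_ring_1 \<Rightarrow> 'a \<Rightarrow> bool) \<Rightarrow> bool" where
  "localizable le \<longleftrightarrow> (\<forall>r. \<exists>s\<in>Loc le. le (- s) r \<and> le r s)"

text \<open>Fractions r/s are represented by pairs (r, s) with s in Loc(R).
  The ordering p/q \<le> r/s iff p s \<le> r q.\<close>
definition frac_le :: "('a::comm_ring_1 \<Rightarrow> 'a \<Rightarrow> bool) \<Rightarrow> 'a \<times> 'a \<Rightarrow> 'a \<times> 'a \<Rightarrow> bool" where
  "frac_le le x y \<longleftrightarrow> le (fst x * snd y) (fst y * snd x)"

definition frac_eq :: "'a::comm_ring_1 \<times> 'a \<Rightarrow> 'a \<times> 'a \<Rightarrow> bool" where
  "frac_eq x y \<longleftrightarrow> fst x * snd y = fst y * snd x"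

definition frac_add :: "'a::comm_ring_1 \<times> 'a \<Rightarrow> 'a \<times> 'a \<Rightarrow> 'a \<times> 'a" where
  "frac_add x y = (fst x * snd y + fst y * snd x, snd x * snd y)"

definition frac_mul :: "'a::comm_ring_1 \<times> 'a \<Rightarrow> 'a \<times> 'a \<Rightarrow> 'a \<times> 'a" where
  "frac_mul x y = (fst x * fst y, snd x * snd y)"

text \<open>Representatives of elements of the bounded part R^bd_loc:
  -n \<le> r/s \<le> n for some n in N_0 (with n identified with n/1).\<close>
definition Bd :: "('a::comm_ring_1 \<Rightarrow> 'a \<Rightarrow> bool) \<Rightarrow> ('a \<times> 'a) set" where
  "Bd le = {x. snd x \<in> Loc le \<and>
      (\<exists>n::nat. frac_le le (- of_nat n, 1) x \<and> frac_le le x (of_nat n, 1))}"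

text \<open>K(R): positive ring morphisms R^bd_loc \<rightarrow> real, represented as functions on
  representatives that respect equality of fractions and vanish off Bd.\<close>
definition Kset :: "('a::comm_ring_1 \<Rightarrow> 'a \<Rightarrow> bool) \<Rightarrow> ('a \<times> 'a \<Rightarrow> real) set" where
  "Kset le = {\<phi>.
      (\<forall>x. x \<notin> Bd le \<longrightarrow> \<phi> x = 0) \<and>
      (\<forall>x\<in>Bd le. \<forall>y\<in>Bd le. frac_eq x y \<longrightarrow> \<phi> x = \<phi> y) \<and>
      \<phi> (1, 1) = 1 \<and>
      (\<forall>x\<in>Bd le. \<forall>y\<in>Bd le. \<phi> (frac_add x y) = \<phi> x + \<phi> y) \<and>
      (\<forall>x\<in>Bd le. \<forall>y\<in>Bd le. \<phi> (frac_mul x y) = \<phi> x * \<phi> y) \<and>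
      (\<forall>x\<in>Bd le. frac_le le (0, 1) x \<longrightarrow> \<phi> x \<ge> 0)}"

definition Ktop :: "('a::comm_ring_1 \<Rightarrow> 'a \<Rightarrow> bool) \<Rightarrow> ('a \<times> 'a \<Rightarrow> real) topology" where
  "Ktop le = topology_generated_by
     {{\<phi> \<in> Kset le. \<phi> x \<in> V} | x V. x \<in> Bd le \<and> open V}"

definition Ofin :: "('a::comm_ring_1 \<Rightarrow> 'a \<Rightarrow> bool) \<Rightarrow> 'a \<Rightarrow> ('a \<times> 'a \<Rightarrow> real) set" where
  "Ofin le s = {\<phi> \<in> Kset le. \<phi> (1, s) > 0}"

definition Dloc :: "('a::comm_ring_1 \<Rightarrow> 'a \<Rightarrow> bool) \<Rightarrow> ('a \<times> 'a \<Rightarrow> real) set set" where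
  "Dloc le = {Ofin le s | s. s \<in> Loc le}"

text \<open>Positivity in C_\<approx>(D): the class of f (with domain B) is \<ge> 0 iff
  f is pointwise \<ge> 0 on some A in D with A \<subseteq> B.\<close>
definition C_approx_nonneg :: "'x set set \<Rightarrow> 'x set \<Rightarrow> ('x \<Rightarrow> real) \<Rightarrow> bool" where
  "C_approx_nonneg D B f \<longleftrightarrow> (\<exists>A\<in>D. A \<subseteq> B \<and> (\<forall>x\<in>A. f x \<ge> 0))"

text \<open>The extended Gelfand transform of r is the class of
  r_s : O_{s<\<infinity>} \<rightarrow> real, \<phi> \<mapsto> \<phi>(1/s)^{-1} \<phi>(r/s), for a chosen s in Loc(R)
  with r/s bounded (the class is independent of this choice).\<close>
definition gelfand_s :: "('a::comm_ring_1 \<Rightarrow> 'a \<Rightarrow> bool) \<Rightarrow> 'a \<Rightarrow> 'a" where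
  "gelfand_s le r = (SOME s. s \<in> Loc le \<and> (r, s) \<in> Bd le)"

definition gelfand_fun :: "('a::comm_ring_1 \<Rightarrow> 'a \<Rightarrow> bool) \<Rightarrow> 'a \<Rightarrow> 'a \<Rightarrow> ('a \<times> 'a \<Rightarrow> real) \<Rightarrow> real" where
  "gelfand_fun le r s = (\<lambda>\<phi>. inverse (\<phi> (1, s)) * \<phi> (r, s))"

definition gelfand_nonneg :: "('a::comm_ring_1 \<Rightarrow> 'a \<Rightarrow> bool) \<Rightarrow> 'a \<Rightarrow> bool" where
  "gelfand_nonneg le r \<longleftrightarrow>
     C_approx_nonneg (Dloc le) (Ofin le (gelfand_s le r)) (gelfand_fun le r (gelfand_s le r))"

definition ddagger_pos :: "('a::comm_ring_1 \<Rightarrow> 'a \<Rightarrow> bool) \<Rightarrow> 'a set" where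
  "ddagger_pos le = {g. \<exists>h. \<forall>k::nat. k \<ge> 1 \<longrightarrow> le 0 (of_nat k * g + h)}"

end

theory Submission
  imports Defs
begin
locale porng =
  fixes le :: "'a::comm_ring_1 \<Rightarrow> 'a \<Rightarrow> bool"
  assumes po: "po_comm_ring le"
    and locz: "localizable le"
    and natloc: "\<forall>n::nat. n \<ge> 1 \<longrightarrow> of_nat n \<in> Loc le"
begin

abbreviation pos where "pos x \<equiv> le 0 x"

lemma refl: "le x x" using po unfolding po_comm_ring_def by blast
lemma antisym: "le x y \<Longrightarrow> le y x \<Longrightarrow> x = y" using po unfolding po_comm_ring_def by blast
lemma trans: "le x y \<Longrightarrow> le y z \<Longrightarrow> le x z" using po unfolding po_comm_ring_def by blast
lemma transl: "le x y \<Longrightarrow> le (x + t) (y + t)" using po unfolding po_comm_ring_def by blast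
lemma pos_mult: "pos x \<Longrightarrow> pos y \<Longrightarrow> pos (x * y)" using po unfolding po_comm_ring_def by blast
lemma pos_sq: "pos (x * x)" using po unfolding po_comm_ring_def by blast

lemma le_iff: "le x y \<longleftrightarrow> pos (y - x)"
proof
  assume "le x y" then show "pos (y - x)" using transl[of x y "-x"] by simp
next
  assume "pos (y - x)" then show "le x y" using transl[of 0 "y - x" x] by simp
qed

lemma pos_add: "pos x \<Longrightarrow> pos y \<Longrightarrow> pos (x + y)"
  using transl[of 0 x y] trans[of 0 y "x + y"] by simp

lemma pos_antisym: "pos x \<Longrightarrow> pos (- x) \<Longrightarrow> x = 0"
  using antisym[of 0 x] le_iff[of x 0] by simp

lemma pos_1: "pos 1" using pos_sq[of 1] by simp
lemma pos_0: "pos 0" using refl by simp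

lemma pos_of_nat: "pos (of_nat n)"
  by (induction n) (auto simp: pos_0 pos_1 pos_add)

lemma pos_of_int: "i \<ge> 0 \<Longrightarrow> pos (of_int i)"
  using pos_of_nat[of "nat i"] by simp

lemma pos_sum: "(\<And>i. i \<in> I \<Longrightarrow> pos (f i)) \<Longrightarrow> pos (sum f I)"
  by (induction I rule: infinite_finite_induct) (auto simp: pos_0 pos_add)

lemma LocD: "s \<in> Loc le \<Longrightarrow> pos (s - 1)" unfolding Loc_def by blast
lemma Loc_cancel: "s \<in> Loc le \<Longrightarrow> pos (r * s) \<Longrightarrow> pos r" unfolding Loc_def by blast
lemma Loc_cancel': "s \<in> Loc le \<Longrightarrow> pos (s * r) \<Longrightarrow> pos r" using Loc_cancel by (simp add: mult.commute)
lemma Loc_pos: "s \<in> Loc le \<Longrightarrow> pos s"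
  using pos_add[OF LocD pos_1] by simp

lemma Loc_1: "1 \<in> Loc le" using natloc by (metis of_nat_1 order_refl)
lemma Loc_nat: "n \<ge> 1 \<Longrightarrow> (of_nat n) \<in> Loc le" using natloc by blast

lemma Loc_mult: assumes "s \<in> Loc le" "t \<in> Loc le" shows "s * t \<in> Loc le"
proof -
  have "s * t - 1 = (s - 1) * (t - 1) + (s - 1) + (t - 1)" by (simp add: algebra_simps)
  moreover have "pos ((s - 1) * (t - 1) + (s - 1) + (t - 1))" using assms by (intro pos_add pos_mult LocD)
  ultimately have "pos (s * t - 1)" by metis
  moreover have "pos r" if "pos (r * (s * t))" for r
    using that assms Loc_cancel by (metis mult.assoc)
  ultimately show ?thesis unfolding Loc_def by blast
qed

lemma Loc_nzd: assumes "s \<in> Loc le" "r * s = 0" shows "r = 0"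
proof -
  have "pos r" using Loc_cancel[OF assms(1)] assms(2) pos_0 by simp
  moreover have "pos (- r)" using Loc_cancel[OF assms(1), of "-r"] assms(2) pos_0 by simp
  ultimately show ?thesis using pos_antisym by blast
qed

lemma Loc_eq: assumes "s \<in> Loc le" "a * s = b * s" shows "a = b"
  using Loc_nzd[OF assms(1), of "a - b"] assms(2) by (simp add: algebra_simps)

lemma pos_mono_Loc: "s \<in> Loc le \<Longrightarrow> pos x \<Longrightarrow> pos (s * x - x)"
  using pos_mult[OF LocD] by (simp add: algebra_simps)


lemma Bd_iff: "x \<in> Bd le \<longleftrightarrow> snd x \<in> Loc le \<and>
   (\<exists>n::nat. pos (fst x + of_nat n * snd x) \<and> pos (of_nat n * snd x - fst x))"
proof -
  have 1: "frac_le le (- of_nat n, 1) x \<longleftrightarrow> pos (fst x + of_nat n * snd x)" for n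
    unfolding frac_le_def fst_conv snd_conv by (subst le_iff) (simp add: algebra_simps)
  have 2: "frac_le le x (of_nat n, 1) \<longleftrightarrow> pos (of_nat n * snd x - fst x)" for n
    unfolding frac_le_def fst_conv snd_conv by (subst le_iff) (simp add: algebra_simps)
  show ?thesis unfolding Bd_def by (simp only: 1 2 mem_Collect_eq)
qed

lemma BdI: "snd x \<in> Loc le \<Longrightarrow> pos (fst x + of_nat n * snd x) \<Longrightarrow> pos (of_nat n * snd x - fst x) \<Longrightarrow> x \<in> Bd le"
  unfolding Bd_iff by blast

lemma Bd_Loc: "x \<in> Bd le \<Longrightarrow> snd x \<in> Loc le" unfolding Bd_iff by blast

lemma pos2_cancel: "pos (2 * z) \<Longrightarrow> pos z"
proof -
  have "(2::nat) \<ge> 1" by simp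
  from Loc_nat[OF this] have "(2::'a) \<in> Loc le" by simp
  then show "pos (2 * z) \<Longrightarrow> pos z" using Loc_cancel' by blast
qed

lemma Bd_add: assumes "x \<in> Bd le" "y \<in> Bd le" shows "frac_add x y \<in> Bd le"
proof -
  obtain p s n where x: "x = (p, s)" "s \<in> Loc le" "pos (p + of_nat n * s)" "pos (of_nat n * s - p)"
    using assms(1) unfolding Bd_iff by (cases x) auto
  obtain q t m where y: "y = (q, t)" "t \<in> Loc le" "pos (q + of_nat m * t)" "pos (of_nat m * t - q)"
    using assms(2) unfolding Bd_iff by (cases y) auto
  have st: "pos s" "pos t" using x y Loc_pos by auto
  have e1: "p * t + q * s + of_nat (n + m) * (s * t) = t * (p + of_nat n * s) + s * (q + of_nat m * t)"
    by (simp add: algebra_simps)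
  have e2: "of_nat (n + m) * (s * t) - (p * t + q * s) = t * (of_nat n * s - p) + s * (of_nat m * t - q)"
    by (simp add: algebra_simps)
  have a: "pos (t * (p + of_nat n * s) + s * (q + of_nat m * t))" using x y st by (intro pos_add[OF pos_mult pos_mult])
  have b: "pos (t * (of_nat n * s - p) + s * (of_nat m * t - q))" using x y st by (intro pos_add[OF pos_mult pos_mult])
  have fa: "frac_add x y = (p * t + q * s, s * t)" using x y by (simp add: frac_add_def)
  show ?thesis unfolding fa apply (rule BdI[where n="n+m"]) unfolding fst_conv snd_conv e1 e2
    by (fact Loc_mult[OF x(2) y(2)] a b)+
qed

lemma Bd_mul: assumes "x \<in> Bd le" "y \<in> Bd le" shows "frac_mul x y \<in> Bd le"
proof -
  obtain p s n where x: "x = (p, s)" "s \<in> Loc le" "pos (p + of_nat n * s)" "pos (of_nat n * s - p)"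
    using assms(1) unfolding Bd_iff by (cases x) auto
  obtain q t m where y: "y = (q, t)" "t \<in> Loc le" "pos (q + of_nat m * t)" "pos (of_nat m * t - q)"
    using assms(2) unfolding Bd_iff by (cases y) auto
  have e1: "2 * (p * q + of_nat (n * m) * (s * t)) = (p + of_nat n * s) * (q + of_nat m * t) + (of_nat n * s - p) * (of_nat m * t - q)"
    by (simp add: algebra_simps)
  have e2: "2 * (of_nat (n * m) * (s * t) - p * q) = (p + of_nat n * s) * (of_nat m * t - q) + (of_nat n * s - p) * (q + of_nat m * t)"
    by (simp add: algebra_simps)
  have "pos (2 * (p * q + of_nat (n * m) * (s * t)))" unfolding e1 using x y by (intro pos_add[OF pos_mult pos_mult])
  then have 1: "pos (p * q + of_nat (n * m) * (s * t))" by (rule pos2_cancel)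
  have "pos (2 * (of_nat (n * m) * (s * t) - p * q))" unfolding e2 using x y by (intro pos_add[OF pos_mult pos_mult])
  then have 2: "pos (of_nat (n * m) * (s * t) - p * q)" by (rule pos2_cancel)
  have fa: "frac_mul x y = (p * q, s * t)" using x y by (simp add: frac_mul_def)
  show ?thesis unfolding fa apply (rule BdI[where n="n*m"]) unfolding fst_conv snd_conv
    by (fact Loc_mult[OF x(2) y(2)] 1 2)+
qed

definition negF :: "'a \<times> 'a \<Rightarrow> 'a \<times> 'a" where "negF x = (- fst x, snd x)"

lemma Bd_neg: assumes "x \<in> Bd le" shows "negF x \<in> Bd le"
proof -
  obtain n where n: "snd x \<in> Loc le" "pos (fst x + of_nat n * snd x)" "pos (of_nat n * snd x - fst x)"
    using assms unfolding Bd_iff by blast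
  have e: "- fst x + of_nat n * snd x = of_nat n * snd x - fst x" "of_nat n * snd x - - fst x = fst x + of_nat n * snd x"
    by (simp_all add: algebra_simps)
  show ?thesis unfolding negF_def apply (rule BdI[where n=n]) unfolding fst_conv snd_conv e
    by (fact n)+
qed

lemma Bd_int: "m \<ge> 1 \<Longrightarrow> (of_int i, of_nat m) \<in> Bd le"
proof -
  assume m: "m \<ge> 1"
  have im: "\<bar>i\<bar> * 1 \<le> \<bar>i\<bar> * int m" using m by (intro mult_left_mono) auto
  have e1: "of_int i + of_nat (nat \<bar>i\<bar>) * of_nat m = (of_int (i + \<bar>i\<bar> * int m) :: 'a)" by simp
  have "pos (of_int (i + \<bar>i\<bar> * int m) :: 'a)" by (rule pos_of_int) (use im in linarith)
  then have a: "pos (of_int i + of_nat (nat \<bar>i\<bar>) * of_nat m)" unfolding e1 .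
  have e2: "of_nat (nat \<bar>i\<bar>) * of_nat m - of_int i = (of_int (\<bar>i\<bar> * int m - i) :: 'a)" by simp
  have "pos (of_int (\<bar>i\<bar> * int m - i) :: 'a)" by (rule pos_of_int) (use im in linarith)
  then have b: "pos (of_nat (nat \<bar>i\<bar>) * of_nat m - of_int i)" unfolding e2 .
  show ?thesis apply (rule BdI[where n="nat \<bar>i\<bar>"]) unfolding fst_conv snd_conv
    by (fact Loc_nat[OF m] a b)+
qed

lemma Bd_nat1: "(of_nat k, 1) \<in> Bd le"
  using Bd_int[of 1 "int k"] by simp

lemma Bd_one_s: assumes "s \<in> Loc le" shows "(1, s) \<in> Bd le"
proof -
  have e: "1 + of_nat 1 * s = s + 1" "of_nat 1 * s - 1 = s - 1" by (simp_all add: algebra_simps)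
  show ?thesis apply (rule BdI[where n=1]) unfolding fst_conv snd_conv e
    by (fact assms pos_add[OF Loc_pos[OF assms] pos_1] LocD[OF assms])+
qed

lemma frac_eq_refl: "frac_eq x x" unfolding frac_eq_def by simp
lemma frac_eq_sym: "frac_eq x y \<Longrightarrow> frac_eq y x" unfolding frac_eq_def by simp
lemma frac_eq_trans: assumes "frac_eq x y" "frac_eq y z" "snd y \<in> Loc le" shows "frac_eq x z"
proof -
  have h1: "fst x * snd y = fst y * snd x" and h2: "fst y * snd z = fst z * snd y"
    using assms unfolding frac_eq_def by auto
  have "(fst x * snd z) * snd y = (fst x * snd y) * snd z" by (simp add: ac_simps)
  also have "\<dots> = (fst y * snd x) * snd z" by (simp only: h1)
  also have "\<dots> = (fst y * snd z) * snd x" by (simp add: ac_simps)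
  also have "\<dots> = (fst z * snd y) * snd x" by (simp only: h2)
  also have "\<dots> = (fst z * snd x) * snd y" by (simp add: ac_simps)
  finally show ?thesis using Loc_eq[OF assms(3)] unfolding frac_eq_def by blast
qed

lemma frac_eq_add: assumes "frac_eq x x'" "frac_eq y y'" shows "frac_eq (frac_add x y) (frac_add x' y')"
proof -
  obtain a b a' b' c d c' d' where xy: "x = (a,b)" "x' = (a',b')" "y = (c,d)" "y' = (c',d')" by (metis prod.exhaust)
  with assms have h: "a * b' = a' * b" "c * d' = c' * d" unfolding frac_eq_def by auto
  have "(a * d + c * b) * (b' * d') = (a * b') * (d * d') + (c * d') * (b * b')" by (simp add: algebra_simps)
  also have "\<dots> = (a' * b) * (d * d') + (c' * d) * (b * b')" using h by simp
  also have "\<dots> = (a' * d' + c' * b') * (b * d)" by (simp add: algebra_simps)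
  finally show ?thesis using xy unfolding frac_eq_def frac_add_def by simp
qed

lemma frac_eq_mul: assumes "frac_eq x x'" "frac_eq y y'" shows "frac_eq (frac_mul x y) (frac_mul x' y')"
proof -
  obtain a b a' b' c d c' d' where xy: "x = (a,b)" "x' = (a',b')" "y = (c,d)" "y' = (c',d')" by (metis prod.exhaust)
  with assms have h: "a * b' = a' * b" "c * d' = c' * d" unfolding frac_eq_def by auto
  have "(a * c) * (b' * d') = (a * b') * (c * d')" by (simp add: algebra_simps)
  also have "\<dots> = (a' * b) * (c' * d)" using h by simp
  also have "\<dots> = (a' * c') * (b * d)" by (simp add: algebra_simps)
  finally show ?thesis using xy unfolding frac_eq_def frac_mul_def by simp
qed

lemma frac_eq_pos: assumes "frac_eq x y" "pos (fst x)" "snd x \<in> Loc le" "snd y \<in> Loc le" shows "pos (fst y)"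
proof -
  have "pos (fst x * snd y)" using assms Loc_pos pos_mult by blast
  then have "pos (fst y * snd x)" using assms(1) unfolding frac_eq_def by simp
  then show ?thesis using assms(3) Loc_cancel by blast
qed

end

context porng begin

lemma KD: assumes "\<phi> \<in> Kset le"
  shows K_off: "x \<notin> Bd le \<Longrightarrow> \<phi> x = 0"
    and K_eq: "x \<in> Bd le \<Longrightarrow> y \<in> Bd le \<Longrightarrow> frac_eq x y \<Longrightarrow> \<phi> x = \<phi> y"
    and K_one: "\<phi> (1, 1) = 1"
    and K_add: "x \<in> Bd le \<Longrightarrow> y \<in> Bd le \<Longrightarrow> \<phi> (frac_add x y) = \<phi> x + \<phi> y"
    and K_mul: "x \<in> Bd le \<Longrightarrow> y \<in> Bd le \<Longrightarrow> \<phi> (frac_mul x y) = \<phi> x * \<phi> y"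
    and K_pos: "x \<in> Bd le \<Longrightarrow> pos (fst x) \<Longrightarrow> \<phi> x \<ge> 0"
proof -
  have fl: "frac_le le (0, 1) x \<longleftrightarrow> pos (fst x)" for x unfolding frac_le_def by simp
  from assms show "x \<notin> Bd le \<Longrightarrow> \<phi> x = 0"
    and "x \<in> Bd le \<Longrightarrow> y \<in> Bd le \<Longrightarrow> frac_eq x y \<Longrightarrow> \<phi> x = \<phi> y"
    and "\<phi> (1, 1) = 1"
    and "x \<in> Bd le \<Longrightarrow> y \<in> Bd le \<Longrightarrow> \<phi> (frac_add x y) = \<phi> x + \<phi> y"
    and "x \<in> Bd le \<Longrightarrow> y \<in> Bd le \<Longrightarrow> \<phi> (frac_mul x y) = \<phi> x * \<phi> y"
    and "x \<in> Bd le \<Longrightarrow> pos (fst x) \<Longrightarrow> \<phi> x \<ge> 0"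
    unfolding Kset_def mem_Collect_eq fl by blast+
qed

lemma K_zero: assumes "\<phi> \<in> Kset le" shows "\<phi> (0, 1) = 0"
proof -
  have b: "(0, 1) \<in> Bd le" using Bd_nat1[of 0] by simp
  have "frac_add (0, 1) (0, 1) = (0::'a, 1::'a)" unfolding frac_add_def by simp
  then have "\<phi> (0,1) = \<phi> (0,1) + \<phi> (0,1)" using K_add[OF assms b b] by simp
  then show ?thesis by simp
qed

lemma K_nat: assumes "\<phi> \<in> Kset le" shows "\<phi> (of_nat k, 1) = real k"
proof (induction k)
  case 0 then show ?case using K_zero[OF assms] by simp
next
  case (Suc k)
  have b1: "(1, 1) \<in> Bd le" using Bd_nat1[of 1] by simp
  have "frac_add (of_nat k, 1) (1, 1) = (of_nat (Suc k) :: 'a, 1::'a)" unfolding frac_add_def by simp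
  then have "\<phi> (of_nat (Suc k), 1) = \<phi> (of_nat k, 1) + \<phi> (1, 1)"
    using K_add[OF assms Bd_nat1[of k] b1] by metis
  then show ?case using Suc K_one[OF assms] by simp
qed

lemma K_neg: assumes "\<phi> \<in> Kset le" "x \<in> Bd le" shows "\<phi> (negF x) = - \<phi> x"
proof -
  have b: "(0, 1) \<in> Bd le" using Bd_nat1[of 0] by simp
  have "frac_eq (frac_add x (negF x)) (0, 1)" unfolding frac_eq_def frac_add_def negF_def by simp
  then have "\<phi> (frac_add x (negF x)) = \<phi> (0, 1)"
    using K_eq[OF assms(1) Bd_add[OF assms(2) Bd_neg[OF assms(2)]] b] by blast
  then show ?thesis using K_add[OF assms(1) assms(2) Bd_neg[OF assms(2)]] K_zero[OF assms(1)] by simp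
qed

lemma K_inv_nat: assumes "\<phi> \<in> Kset le" "n \<ge> 1" shows "\<phi> (1, of_nat n) = 1 / real n"
proof -
  have b: "(1, of_nat n) \<in> Bd le" using Bd_one_s[OF Loc_nat[OF assms(2)]] .
  have b1: "(1, 1) \<in> Bd le" using Bd_nat1[of 1] by simp
  have "frac_eq (frac_mul (of_nat n, 1) (1, of_nat n)) (1, 1)" unfolding frac_eq_def frac_mul_def by simp
  then have "\<phi> (frac_mul (of_nat n, 1) (1, of_nat n)) = 1"
    using K_eq[OF assms(1) Bd_mul[OF Bd_nat1 b] b1] K_one[OF assms(1)] by simp
  then have "real n * \<phi> (1, of_nat n) = 1" using K_mul[OF assms(1) Bd_nat1 b] K_nat[OF assms(1)] by simp
  then show ?thesis using assms(2) by (simp add: field_simps)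
qed

lemma K_1s_pos: assumes "\<phi> \<in> Kset le" "s \<in> Loc le" shows "\<phi> (1, s) \<ge> 0"
  using K_pos[OF assms(1) Bd_one_s[OF assms(2)]] pos_1 by simp

lemma Bd_r_s: "s \<in> Loc le \<Longrightarrow> le (- s) r \<Longrightarrow> le r s \<Longrightarrow> (r, s) \<in> Bd le"
  unfolding Bd_def frac_le_def by (auto intro!: exI[of _ 1])

lemma gelfand_s: "gelfand_s le r \<in> Loc le \<and> (r, gelfand_s le r) \<in> Bd le"
proof -
  obtain s where "s \<in> Loc le" "le (- s) r" "le r s" using locz unfolding localizable_def by blast
  then have "\<exists>s. s \<in> Loc le \<and> (r, s) \<in> Bd le" using Bd_r_s by blast
  then show ?thesis unfolding gelfand_s_def by (rule someI_ex)
qed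

end

context porng begin

definition Pos where "Pos = {x \<in> Bd le. pos (fst x)}"

definition precone where "precone P \<longleftrightarrow> P \<subseteq> Bd le \<and> (\<forall>x\<in>P. \<forall>y\<in>Bd le. frac_eq x y \<longrightarrow> y \<in> P) \<and>
   Pos \<subseteq> P \<and> (\<forall>x\<in>P. \<forall>y\<in>P. frac_add x y \<in> P) \<and> (\<forall>x\<in>P. \<forall>y\<in>P. frac_mul x y \<in> P)"

definition cone where "cone P \<longleftrightarrow> precone P \<and> (- 1, 1) \<notin> P"

definition ext where "ext P x = {z \<in> Bd le. \<exists>a\<in>P. \<exists>b\<in>P. frac_eq z (frac_add a (frac_mul x b))}"

lemma pcD: assumes "precone P"
  shows pc_Bd: "x \<in> P \<Longrightarrow> x \<in> Bd le"
    and pc_eq: "x \<in> P \<Longrightarrow> y \<in> Bd le \<Longrightarrow> frac_eq x y \<Longrightarrow> y \<in> P"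
    and pc_Pos: "x \<in> Pos \<Longrightarrow> x \<in> P"
    and pc_add: "x \<in> P \<Longrightarrow> y \<in> P \<Longrightarrow> frac_add x y \<in> P"
    and pc_mul: "x \<in> P \<Longrightarrow> y \<in> P \<Longrightarrow> frac_mul x y \<in> P"
  using assms unfolding precone_def by blast+

lemma pc_posI: "precone P \<Longrightarrow> x \<in> Bd le \<Longrightarrow> pos (fst x) \<Longrightarrow> x \<in> P"
  using pc_Pos unfolding Pos_def by blast

lemma precone_Pos: "precone Pos"
  unfolding precone_def
proof (intro conjI ballI impI)
  show "Pos \<subseteq> Bd le" unfolding Pos_def by blast
  show "Pos \<subseteq> Pos" by blast
  fix x y assume x: "x \<in> Pos"
  { assume y: "y \<in> Bd le" "frac_eq x y"
    then show "y \<in> Pos" using x frac_eq_pos[of x y] Bd_Loc unfolding Pos_def by blast }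
  { assume y: "y \<in> Pos"
    have "pos (fst x * snd y + fst y * snd x)"
      using x y Loc_pos Bd_Loc unfolding Pos_def by (blast intro: pos_add pos_mult)
    then show "frac_add x y \<in> Pos" using x y Bd_add unfolding Pos_def frac_add_def by auto
    have "pos (fst x * fst y)"
      using x y unfolding Pos_def by (blast intro: pos_mult)
    then show "frac_mul x y \<in> Pos" using x y Bd_mul unfolding Pos_def frac_mul_def by auto }
qed

lemma Bd_0: "(0, 1) \<in> Bd le" using Bd_nat1[of 0] by simp
lemma Bd_1: "(1, 1) \<in> Bd le" using Bd_nat1[of 1] by simp

lemma id_add: "frac_eq (frac_add (frac_add a1 (frac_mul x b1)) (frac_add a2 (frac_mul x b2)))
   (frac_add (frac_add a1 a2) (frac_mul x (frac_add b1 b2)))"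
  unfolding frac_eq_def frac_add_def frac_mul_def by (simp add: algebra_simps)

lemma id_mul: "frac_eq (frac_mul (frac_add a1 (frac_mul x b1)) (frac_add a2 (frac_mul x b2)))
   (frac_add (frac_add (frac_mul a1 a2) (frac_mul (frac_mul x x) (frac_mul b1 b2)))
      (frac_mul x (frac_add (frac_mul a1 b2) (frac_mul a2 b1))))"
  unfolding frac_eq_def frac_add_def frac_mul_def by (simp add: algebra_simps)

lemma id_unit: "frac_eq z (frac_add z (frac_mul x (0, 1)))"
  unfolding frac_eq_def frac_add_def frac_mul_def by (simp add: algebra_simps)

lemma id_x: "frac_eq x (frac_add (0, 1) (frac_mul x (1, 1)))"
  unfolding frac_eq_def frac_add_def frac_mul_def by (simp add: algebra_simps)

lemma extI: "z \<in> Bd le \<Longrightarrow> a \<in> P \<Longrightarrow> b \<in> P \<Longrightarrow> frac_eq z (frac_add a (frac_mul x b)) \<Longrightarrow> z \<in> ext P x"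
  unfolding ext_def by blast

lemma extE: "z \<in> ext P x \<Longrightarrow> (\<And>a b. z \<in> Bd le \<Longrightarrow> a \<in> P \<Longrightarrow> b \<in> P \<Longrightarrow> frac_eq z (frac_add a (frac_mul x b)) \<Longrightarrow> thesis) \<Longrightarrow> thesis"
  unfolding ext_def by blast

lemma precone_ext: assumes P: "precone P" and x: "x \<in> Bd le"
  shows "precone (ext P x)" "P \<subseteq> ext P x" "x \<in> ext P x"
proof -
  have P0: "(0, 1) \<in> P" using pc_posI[OF P Bd_0] pos_0 by simp
  have P1: "(1, 1) \<in> P" using pc_posI[OF P Bd_1] pos_1 by simp
  have BdP: "y \<in> P \<Longrightarrow> y \<in> Bd le" for y using pc_Bd[OF P] .
  show sub: "P \<subseteq> ext P x"
  proof
    fix z assume z: "z \<in> P"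
    show "z \<in> ext P x" by (rule extI[OF BdP[OF z] z P0 id_unit])
  qed
  show "x \<in> ext P x" by (rule extI[OF x P0 P1 id_x])
  show "precone (ext P x)" unfolding precone_def
  proof (intro conjI ballI impI)
    show "ext P x \<subseteq> Bd le" unfolding ext_def by blast
    show "Pos \<subseteq> ext P x" using sub pc_Pos[OF P] by blast
    fix z w assume z: "z \<in> ext P x"
    then obtain a b where ab: "z \<in> Bd le" "a \<in> P" "b \<in> P" "frac_eq z (frac_add a (frac_mul x b))"
      by (rule extE)
    { assume w: "w \<in> Bd le" "frac_eq z w"
      have "frac_eq w (frac_add a (frac_mul x b))"
        using frac_eq_trans[OF frac_eq_sym[OF w(2)] ab(4) Bd_Loc[OF ab(1)]] .
      then show "w \<in> ext P x" by (rule extI[OF w(1) ab(2) ab(3)]) }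
    assume w: "w \<in> ext P x"
    then obtain c d where cd: "w \<in> Bd le" "c \<in> P" "d \<in> P" "frac_eq w (frac_add c (frac_mul x d))"
      by (rule extE)
    have Bab: "frac_add a (frac_mul x b) \<in> Bd le" using Bd_add[OF BdP[OF ab(2)] Bd_mul[OF x BdP[OF ab(3)]]] .
    have Bcd: "frac_add c (frac_mul x d) \<in> Bd le" using Bd_add[OF BdP[OF cd(2)] Bd_mul[OF x BdP[OF cd(3)]]] .
    { have e1: "frac_eq (frac_add z w) (frac_add (frac_add a (frac_mul x b)) (frac_add c (frac_mul x d)))"
        using frac_eq_add[OF ab(4) cd(4)] .
      have e2: "frac_eq (frac_add z w) (frac_add (frac_add a c) (frac_mul x (frac_add b d)))"
        using frac_eq_trans[OF e1 id_add Bd_Loc[OF Bd_add[OF Bab Bcd]]] .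
      have "frac_add a c \<in> P" "frac_add b d \<in> P" using pc_add[OF P ab(2) cd(2)] pc_add[OF P ab(3) cd(3)] by auto
      then show "frac_add z w \<in> ext P x" by (rule extI[OF Bd_add[OF ab(1) cd(1)] _ _ e2]) }
    { have e1: "frac_eq (frac_mul z w) (frac_mul (frac_add a (frac_mul x b)) (frac_add c (frac_mul x d)))"
        using frac_eq_mul[OF ab(4) cd(4)] .
      have e2: "frac_eq (frac_mul z w) (frac_add (frac_add (frac_mul a c) (frac_mul (frac_mul x x) (frac_mul b d)))
            (frac_mul x (frac_add (frac_mul a d) (frac_mul c b))))"
        using frac_eq_trans[OF e1 id_mul Bd_Loc[OF Bd_mul[OF Bab Bcd]]] .
      have "pos (fst (frac_mul x x))" using pos_sq unfolding frac_mul_def by simp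
      then have xx: "frac_mul x x \<in> P" by (rule pc_posI[OF P Bd_mul[OF x x]])
      have 1: "frac_add (frac_mul a c) (frac_mul (frac_mul x x) (frac_mul b d)) \<in> P"
        by (rule pc_add[OF P pc_mul[OF P ab(2) cd(2)] pc_mul[OF P xx pc_mul[OF P ab(3) cd(3)]]])
      have 2: "frac_add (frac_mul a d) (frac_mul c b) \<in> P"
        by (rule pc_add[OF P pc_mul[OF P ab(2) cd(3)] pc_mul[OF P cd(2) ab(3)]])
      show "frac_mul z w \<in> ext P x" by (rule extI[OF Bd_mul[OF ab(1) cd(1)] 1 2 e2]) }
  qed
qed

lemma id_tot:
  assumes "frac_eq (- 1, 1) (frac_add a1 (frac_mul x b1))"
      and "frac_eq (- 1, 1) (frac_add a2 (frac_mul (negF x) b2))"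
  shows "frac_eq (- 1, 1) (frac_add (frac_add a1 a2) (frac_add (frac_mul a1 a2) (frac_mul (frac_mul x x) (frac_mul b1 b2))))"
proof -
  obtain \<alpha>1 \<sigma>1 \<beta>1 \<rho>1 \<alpha>2 \<sigma>2 \<beta>2 \<rho>2 \<xi> \<tau> where
    p: "a1 = (\<alpha>1, \<sigma>1)" "b1 = (\<beta>1, \<rho>1)" "a2 = (\<alpha>2, \<sigma>2)" "b2 = (\<beta>2, \<rho>2)" "x = (\<xi>, \<tau>)"
    by (metis prod.exhaust)
  from assms p have h1: "- (\<sigma>1 * (\<tau> * \<rho>1)) = \<alpha>1 * (\<tau> * \<rho>1) + \<xi> * \<beta>1 * \<sigma>1"
    and h2: "- (\<sigma>2 * (\<tau> * \<rho>2)) = \<alpha>2 * (\<tau> * \<rho>2) + (- \<xi>) * \<beta>2 * \<sigma>2"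
    unfolding frac_eq_def frac_add_def frac_mul_def negF_def by simp_all
  have E1: "\<xi> * \<beta>1 * \<sigma>1 = - ((\<sigma>1 + \<alpha>1) * (\<tau> * \<rho>1))" using h1 by (simp add: algebra_simps)
  have E2: "\<xi> * \<beta>2 * \<sigma>2 = (\<sigma>2 + \<alpha>2) * (\<tau> * \<rho>2)" using h2 by (simp add: algebra_simps)
  have "(\<alpha>1 * \<sigma>2 + \<alpha>2 * \<sigma>1) * (\<sigma>1 * \<sigma>2 * (\<tau> * \<tau> * (\<rho>1 * \<rho>2))) +
        (\<alpha>1 * \<alpha>2 * (\<tau> * \<tau> * (\<rho>1 * \<rho>2)) + \<xi> * \<xi> * (\<beta>1 * \<beta>2) * (\<sigma>1 * \<sigma>2)) * (\<sigma>1 * \<sigma>2)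
      = \<sigma>1 * \<sigma>2 * ((\<alpha>1 * \<sigma>2 + \<alpha>2 * \<sigma>1) * (\<tau> * \<tau> * (\<rho>1 * \<rho>2)) + \<alpha>1 * \<alpha>2 * (\<tau> * \<tau> * (\<rho>1 * \<rho>2))
           + (\<xi> * \<beta>1 * \<sigma>1) * (\<xi> * \<beta>2 * \<sigma>2))"
    by (simp add: algebra_simps)
  also have "\<dots> = \<sigma>1 * \<sigma>2 * ((\<alpha>1 * \<sigma>2 + \<alpha>2 * \<sigma>1) * (\<tau> * \<tau> * (\<rho>1 * \<rho>2)) + \<alpha>1 * \<alpha>2 * (\<tau> * \<tau> * (\<rho>1 * \<rho>2))
           + (- ((\<sigma>1 + \<alpha>1) * (\<tau> * \<rho>1))) * ((\<sigma>2 + \<alpha>2) * (\<tau> * \<rho>2)))"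
    by (simp only: E1 E2)
  also have "\<dots> = - (\<sigma>1 * \<sigma>2 * (\<sigma>1 * \<sigma>2 * (\<tau> * \<tau> * (\<rho>1 * \<rho>2))))"
    by (simp add: algebra_simps)
  finally show ?thesis using p unfolding frac_eq_def frac_add_def frac_mul_def by simp
qed

end

context porng begin

lemma Bd_m1: "(- 1, 1) \<in> Bd le" using Bd_int[of 1 "-1"] by simp

lemma max_cone: assumes P0: "precone P0" "(- 1, 1) \<notin> P0"
  obtains M where "cone M" "P0 \<subseteq> M" "\<And>Q. cone Q \<Longrightarrow> M \<subseteq> Q \<Longrightarrow> Q = M"
proof -
  let ?A = "{Q. cone Q \<and> P0 \<subseteq> Q}"
  have "\<exists>M\<in>?A. \<forall>X\<in>?A. M \<subseteq> X \<longrightarrow> X = M"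
  proof (rule subset_Zorn)
    fix C assume C: "subset.chain ?A C"
    then have CA: "C \<subseteq> ?A" and ch: "\<And>X Y. X \<in> C \<Longrightarrow> Y \<in> C \<Longrightarrow> X \<subseteq> Y \<or> Y \<subseteq> X"
      unfolding subset_chain_def by auto
    show "\<exists>U\<in>?A. \<forall>X\<in>C. X \<subseteq> U"
    proof (cases "C = {}")
      case True
      have "P0 \<in> ?A" using P0 unfolding cone_def by blast
      then show ?thesis using True by blast
    next
      case False
      have pcs: "\<And>X. X \<in> C \<Longrightarrow> precone X" using CA unfolding cone_def by blast
      have "precone (\<Union>C)" unfolding precone_def
      proof (intro conjI ballI impI)
        show "\<Union>C \<subseteq> Bd le" using pcs pc_Bd by blast
        show "Pos \<subseteq> \<Union>C" using False pcs pc_Pos by blast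
        fix x y assume x: "x \<in> \<Union>C"
        then obtain X where X: "X \<in> C" "x \<in> X" by blast
        { assume "y \<in> Bd le" "frac_eq x y"
          then show "y \<in> \<Union>C" using pc_eq[OF pcs[OF X(1)] X(2)] X(1) by blast }
        assume y: "y \<in> \<Union>C"
        then obtain Y where Y: "Y \<in> C" "y \<in> Y" by blast
        have "\<exists>Z\<in>C. x \<in> Z \<and> y \<in> Z" using ch[OF X(1) Y(1)] X Y by blast
        then obtain Z where Z: "Z \<in> C" "x \<in> Z" "y \<in> Z" by blast
        show "frac_add x y \<in> \<Union>C" using pc_add[OF pcs[OF Z(1)] Z(2) Z(3)] Z(1) by blast
        show "frac_mul x y \<in> \<Union>C" using pc_mul[OF pcs[OF Z(1)] Z(2) Z(3)] Z(1) by blast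
      qed
      moreover have "(- 1, 1) \<notin> \<Union>C" using CA unfolding cone_def by blast
      moreover have "P0 \<subseteq> \<Union>C" using CA False by blast
      ultimately have "\<Union>C \<in> ?A" unfolding cone_def by blast
      then show ?thesis by blast
    qed
  qed
  then obtain M where M: "cone M" "P0 \<subseteq> M" "\<And>X. cone X \<Longrightarrow> P0 \<subseteq> X \<Longrightarrow> M \<subseteq> X \<Longrightarrow> X = M" by auto
  show ?thesis
  proof (rule that[OF M(1) M(2)])
    fix Q assume Q: "cone Q" "M \<subseteq> Q"
    then have "P0 \<subseteq> Q" using M(2) by (rule_tac subset_trans) auto
    then show "Q = M" using M(3) Q by blast
  qed
qed

lemma total: assumes M: "cone M" "\<And>Q. cone Q \<Longrightarrow> M \<subseteq> Q \<Longrightarrow> Q = M" and x: "x \<in> Bd le"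
  shows "x \<in> M \<or> negF x \<in> M"
proof (rule ccontr)
  assume nx: "\<not> (x \<in> M \<or> negF x \<in> M)"
  have pM: "precone M" using M(1) unfolding cone_def by blast
  have m1: "(- 1, 1) \<in> ext M y" if y: "y \<in> Bd le" "y \<notin> M" for y
  proof (rule ccontr)
    assume "(- 1, 1) \<notin> ext M y"
    then have "cone (ext M y)" using precone_ext[OF pM y(1)] unfolding cone_def by blast
    then have "ext M y = M" using M(2) precone_ext(2)[OF pM y(1)] by blast
    then show False using precone_ext(3)[OF pM y(1)] y(2) by blast
  qed
  obtain a1 b1 where 1: "a1 \<in> M" "b1 \<in> M" "frac_eq (- 1, 1) (frac_add a1 (frac_mul x b1))"
    using m1[OF x] nx by (blast elim: extE)
  obtain a2 b2 where 2: "a2 \<in> M" "b2 \<in> M" "frac_eq (- 1, 1) (frac_add a2 (frac_mul (negF x) b2))"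
    using m1[OF Bd_neg[OF x]] nx by (blast elim: extE)
  have e: "frac_eq (- 1, 1) (frac_add (frac_add a1 a2) (frac_add (frac_mul a1 a2) (frac_mul (frac_mul x x) (frac_mul b1 b2))))"
    by (rule id_tot[OF 1(3) 2(3)])
  have "pos (fst (frac_mul x x))" using pos_sq unfolding frac_mul_def by simp
  then have xx: "frac_mul x x \<in> M" by (rule pc_posI[OF pM Bd_mul[OF x x]])
  have c: "frac_add (frac_add a1 a2) (frac_add (frac_mul a1 a2) (frac_mul (frac_mul x x) (frac_mul b1 b2))) \<in> M"
    by (rule pc_add[OF pM pc_add[OF pM 1(1) 2(1)] pc_add[OF pM pc_mul[OF pM 1(1) 2(1)] pc_mul[OF pM xx pc_mul[OF pM 1(2) 2(2)]]]])
  have "(- 1, 1) \<in> M" by (rule pc_eq[OF pM c Bd_m1 frac_eq_sym[OF e]])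
  then show False using M(1) unfolding cone_def by blast
qed

lemma arch_step:
  fixes g w \<alpha> \<sigma> \<beta> \<rho> :: 'a and k N :: nat
  assumes H: "g * \<beta> * \<sigma> = (\<sigma> + \<alpha>) * w * \<rho>"
    and pos: "pos \<alpha>" "pos \<beta>" "pos w" "\<sigma> \<in> Loc le" "\<rho> \<in> Loc le" "k \<ge> 1"
    and kb: "pos (of_nat k * \<rho> - \<beta>)"
    and cur: "pos (of_nat k * g + of_nat (Suc N) * w)"
  shows "pos (of_nat k * g + of_nat N * w)"
proof -
  let ?K = "of_nat k :: 'a" and ?N = "of_nat N :: 'a"
  have eq: "(?K * \<rho> * \<sigma>) * (?K * g + ?N * w) =
     \<sigma> * ((?K * \<rho> - \<beta>) * (?K * g + of_nat (Suc N) * w)) + ?K * \<alpha> * w * \<rho> + of_nat (Suc N) * \<beta> * w * \<sigma>"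
  proof -
    have "\<sigma> * ((?K * \<rho> - \<beta>) * (?K * g + of_nat (Suc N) * w)) + ?K * \<alpha> * w * \<rho> + of_nat (Suc N) * \<beta> * w * \<sigma>
       = ?K * ?K * \<rho> * g * \<sigma> + ?K * (?N + 1) * \<rho> * w * \<sigma> - ?K * (g * \<beta> * \<sigma>) + ?K * \<alpha> * w * \<rho>"
      by (simp add: algebra_simps)
    also have "\<dots> = ?K * ?K * \<rho> * g * \<sigma> + ?K * (?N + 1) * \<rho> * w * \<sigma> - ?K * ((\<sigma> + \<alpha>) * w * \<rho>) + ?K * \<alpha> * w * \<rho>"
      by (simp only: H)
    also have "\<dots> = (?K * \<rho> * \<sigma>) * (?K * g + ?N * w)" by (simp add: algebra_simps)
    finally show ?thesis by simp
  qed
  have s: "pos \<sigma>" "pos \<rho>" using pos Loc_pos by auto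
  have "pos (\<sigma> * ((?K * \<rho> - \<beta>) * (?K * g + of_nat (Suc N) * w)) + ?K * \<alpha> * w * \<rho> + of_nat (Suc N) * \<beta> * w * \<sigma>)"
    by (rule pos_add[OF pos_add[OF pos_mult[OF s(1) pos_mult[OF kb cur]]
        pos_mult[OF pos_mult[OF pos_mult[OF pos_of_nat pos(1)] pos(3)] s(2)]]
        pos_mult[OF pos_mult[OF pos_mult[OF pos_of_nat pos(2)] pos(3)] s(1)]])
  then have "pos ((?K * \<rho> * \<sigma>) * (?K * g + ?N * w))" unfolding eq .
  moreover have "?K * \<rho> * \<sigma> \<in> Loc le" by (rule Loc_mult[OF Loc_mult[OF Loc_nat[OF pos(6)] pos(5)] pos(4)])
  ultimately show ?thesis using Loc_cancel' by metis
qed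

lemma arch: assumes f: "f \<in> Bd le" and m1: "(- 1, 1) \<in> ext Pos (negF f)"
  shows "pos (fst f)"
proof -
  obtain a b where ab: "a \<in> Pos" "b \<in> Pos" "frac_eq (- 1, 1) (frac_add a (frac_mul (negF f) b))"
    using m1 by (blast elim: extE)
  obtain \<alpha> \<sigma> \<beta> \<rho> g w where p: "a = (\<alpha>, \<sigma>)" "b = (\<beta>, \<rho>)" "f = (g, w)" by (metis prod.exhaust)
  have pa: "pos \<alpha>" "pos \<beta>" "\<sigma> \<in> Loc le" "\<rho> \<in> Loc le" "w \<in> Loc le"
    using ab f p Bd_Loc unfolding Pos_def by auto
  have "- (\<sigma> * (w * \<rho>)) = \<alpha> * (w * \<rho>) + - g * \<beta> * \<sigma>"
    using ab(3) p unfolding frac_eq_def frac_add_def frac_mul_def negF_def by simp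
  then have H: "g * \<beta> * \<sigma> = (\<sigma> + \<alpha>) * w * \<rho>" by (simp add: algebra_simps)
  obtain k0 where k0: "pos (of_nat k0 * \<rho> - \<beta>)" using ab(2) p unfolding Pos_def Bd_iff by auto
  define k where "k = Suc k0"
  have k1: "k \<ge> 1" unfolding k_def by simp
  have kb: "pos (of_nat k * \<rho> - \<beta>)"
  proof -
    have eq: "of_nat k * \<rho> - \<beta> = (of_nat k0 * \<rho> - \<beta>) + \<rho>" unfolding k_def by (simp add: algebra_simps)
    show ?thesis by (simp only: eq) (rule pos_add[OF k0 Loc_pos[OF pa(4)]])
  qed
  obtain m where m: "pos (g + of_nat m * w)" using f p unfolding Bd_iff by auto
  have wp: "pos w" using Loc_pos pa by blast
  have ind: "pos (of_nat k * g + of_nat (k * m - j) * w)" if "j \<le> k * m" for j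
    using that
  proof (induction j)
    case 0
    have "of_nat k * g + of_nat (k * m - 0) * w = of_nat k * (g + of_nat m * w)" by (simp add: algebra_simps)
    then show ?case using pos_mult[OF pos_of_nat m] by simp
  next
    case (Suc j)
    then have IH: "pos (of_nat k * g + of_nat (k * m - j) * w)" by simp
    have "k * m - j = Suc (k * m - Suc j)" using Suc.prems by simp
    then have "pos (of_nat k * g + of_nat (Suc (k * m - Suc j)) * w)" using IH by simp
    then show ?case by (rule arch_step[OF H pa(1) pa(2) wp pa(3) pa(4) k1 kb])
  qed
  from ind[of "k * m"] have "pos (of_nat k * g)" by simp
  then have "pos g" by (rule Loc_cancel'[OF Loc_nat[OF k1]])
  then show ?thesis using p by simp
qed

end

lemma dense_frac: fixes a b :: real assumes "a < b"
  shows "\<exists>i m. m \<ge> (1::nat) \<and> a < real_of_int i / real m \<and> real_of_int i / real m < b"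
proof -
  obtain r where r: "r \<in> \<rat>" "a < r" "r < b" using Rats_dense_in_real[OF assms] by blast
  obtain i j where ij: "j > 0" "r = of_int i / of_int j" using Rats_cases'[OF r(1)] by metis
  have "real (nat j) = real_of_int j" using ij by simp
  then show ?thesis using ij r by (intro exI[of _ i] exI[of _ "nat j"]) auto
qed

context porng begin

definition rp :: "int \<Rightarrow> nat \<Rightarrow> 'a \<times> 'a" where "rp i m = (of_int i, of_nat m)"

definition cut where "cut M x c \<longleftrightarrow>
  (\<forall>i m. m \<ge> 1 \<longrightarrow> real_of_int i / real m < c \<longrightarrow> frac_add x (negF (rp i m)) \<in> M) \<and>
  (\<forall>i m. m \<ge> 1 \<longrightarrow> real_of_int i / real m > c \<longrightarrow> frac_add (rp i m) (negF x) \<in> M)"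

lemma cutD1: "cut M x c \<Longrightarrow> m \<ge> 1 \<Longrightarrow> real_of_int i / real m < c \<Longrightarrow> frac_add x (negF (rp i m)) \<in> M"
  unfolding cut_def by blast
lemma cutD2: "cut M x c \<Longrightarrow> m \<ge> 1 \<Longrightarrow> real_of_int i / real m > c \<Longrightarrow> frac_add (rp i m) (negF x) \<in> M"
  unfolding cut_def by blast

lemma Bd_rp: "m \<ge> 1 \<Longrightarrow> rp i m \<in> Bd le" unfolding rp_def by (rule Bd_int)

lemma rp_Pos: "m \<ge> 1 \<Longrightarrow> i \<ge> 0 \<Longrightarrow> rp i m \<in> Pos"
  unfolding Pos_def using Bd_rp pos_of_int unfolding rp_def by auto

lemma rp_pos_real: "m \<ge> 1 \<Longrightarrow> real_of_int i / real m \<ge> 0 \<Longrightarrow> i \<ge> 0"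
  by (simp add: zero_le_divide_iff)

lemma cone_rp: assumes M: "cone M" and m: "m \<ge> 1" and r: "rp i m \<in> M" shows "i \<ge> 0"
proof (rule ccontr)
  assume "\<not> i \<ge> 0"
  then have i: "i < 0" by simp
  have pM: "precone M" using M unfolding cone_def by blast
  have "rp (int m) (nat (- i)) \<in> Pos" using i by (intro rp_Pos) auto
  then have r2: "rp (int m) (nat (- i)) \<in> M" using pc_Pos[OF pM] by blast
  have "frac_eq (frac_mul (rp i m) (rp (int m) (nat (- i)))) (- 1, 1)"
    using i unfolding rp_def frac_mul_def frac_eq_def by simp
  then have "(- 1, 1) \<in> M" by (rule pc_eq[OF pM pc_mul[OF pM r r2] Bd_m1])
  then show False using M unfolding cone_def by blast
qed

lemma I1: "frac_eq (frac_add (frac_add (rp i1 m1) (negF x)) (frac_add x (negF (rp i2 m2)))) (rp (i1 * int m2 - i2 * int m1) (m1 * m2))"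
  by (cases x) (simp add: rp_def frac_eq_def frac_add_def negF_def algebra_simps)

lemma I_shift: "frac_eq (frac_add (frac_add x (negF (rp i' m'))) (rp (i' * int m - i * int m') (m' * m))) (frac_add x (negF (rp i m)))"
  by (cases x) (simp add: rp_def frac_eq_def frac_add_def negF_def algebra_simps)

lemma I_neg: "frac_eq (negF (frac_add x (negF (rp i m)))) (frac_add (rp i m) (negF x))"
  by (cases x) (simp add: rp_def frac_eq_def frac_add_def negF_def algebra_simps)

lemma I_ub: "frac_eq (frac_add (frac_add x (negF (rp i m))) (frac_add (rp (int n) 1) (negF x))) (rp (int n * int m - i) m)"
  by (cases x) (simp add: rp_def frac_eq_def frac_add_def negF_def algebra_simps)

lemma I_back: "frac_eq (frac_add (frac_add (rp i m) (negF x)) x) (rp i m)"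
  by (cases x) (simp add: rp_def frac_eq_def frac_add_def negF_def algebra_simps)

lemma Bd_sub: "x \<in> Bd le \<Longrightarrow> m \<ge> 1 \<Longrightarrow> frac_add x (negF (rp i m)) \<in> Bd le"
  using Bd_add Bd_neg Bd_rp by blast
lemma Bd_sub2: "x \<in> Bd le \<Longrightarrow> m \<ge> 1 \<Longrightarrow> frac_add (rp i m) (negF x) \<in> Bd le"
  using Bd_add Bd_neg Bd_rp by blast

lemma cut_unique: assumes M: "cone M" and c: "cut M x c" and d: "cut M x d" and x: "x \<in> Bd le"
  shows "c = d"
proof (rule ccontr)
  have pM: "precone M" using M unfolding cone_def by blast
  have main: False if cd: "cut M x c'" "cut M x d'" "c' < d'" for c' d'
  proof -
    obtain i1 m1 where 1: "m1 \<ge> 1" "c' < real_of_int i1 / real m1" "real_of_int i1 / real m1 < d'"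
      using dense_frac[OF cd(3)] by blast
    obtain i2 m2 where 2: "m2 \<ge> 1" "real_of_int i1 / real m1 < real_of_int i2 / real m2" "real_of_int i2 / real m2 < d'"
      using dense_frac[OF 1(3)] by blast
    have a: "frac_add (rp i1 m1) (negF x) \<in> M" using cutD2[OF cd(1) 1(1) 1(2)] .
    have b: "frac_add x (negF (rp i2 m2)) \<in> M" using cutD1[OF cd(2) 2(1) 2(3)] .
    have mm: "m1 * m2 \<ge> 1" using 1 2 by simp
    have r: "rp (i1 * int m2 - i2 * int m1) (m1 * m2) \<in> M"
      by (rule pc_eq[OF pM pc_add[OF pM a b] Bd_rp[OF mm] I1])
    have "i1 * int m2 - i2 * int m1 \<ge> 0" by (rule cone_rp[OF M mm r])
    moreover have "real_of_int i1 * real m2 < real_of_int i2 * real m1" using 1 2 by (simp add: field_simps)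
    ultimately show False by (smt (verit) of_int_less_iff of_int_mult of_int_of_nat_eq)
  qed
  assume "c \<noteq> d"
  then show False using main[OF c d] main[OF d c] by linarith
qed

lemma cut_exists: assumes M: "cone M" and tot: "\<And>y. y \<in> Bd le \<Longrightarrow> y \<in> M \<or> negF y \<in> M"
  and x: "x \<in> Bd le" shows "\<exists>c. cut M x c"
proof -
  have pM: "precone M" using M unfolding cone_def by blast
  obtain n where n: "pos (fst x + of_nat n * snd x)" "pos (of_nat n * snd x - fst x)" using x unfolding Bd_iff by blast
  define S where "S = {real_of_int i / real m | i m. m \<ge> 1 \<and> frac_add x (negF (rp i m)) \<in> M}"
  have "frac_add x (negF (rp (- int n) 1)) \<in> Pos"
    using Bd_sub[OF x, of 1 "- int n"] n unfolding Pos_def rp_def negF_def frac_add_def by simp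
  then have "real_of_int (- int n) / real (1::nat) \<in> S" unfolding S_def using pc_Pos[OF pM] by fastforce
  then have Sne: "S \<noteq> {}" by blast
  have nx: "frac_add (rp (int n) 1) (negF x) \<in> M"
  proof -
    have "frac_add (rp (int n) 1) (negF x) \<in> Pos"
      using Bd_sub2[OF x, of 1 "int n"] n unfolding Pos_def rp_def negF_def frac_add_def by (simp add: algebra_simps)
    then show ?thesis using pc_Pos[OF pM] by blast
  qed
  have ub: "q \<le> real n" if qS: "q \<in> S" for q
  proof -
    obtain i m where im: "q = real_of_int i / real m" "m \<ge> 1" "frac_add x (negF (rp i m)) \<in> M"
      using qS unfolding S_def by blast
    have "rp (int n * int m - i) m \<in> M"
      by (rule pc_eq[OF pM pc_add[OF pM im(3) nx] Bd_rp[OF im(2)] I_ub])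
    then have "int n * int m - i \<ge> 0" by (rule cone_rp[OF M im(2)])
    then have "real_of_int i \<le> real n * real m" by (metis diff_ge_0_iff_ge of_int_le_iff of_int_mult of_int_of_nat_eq)
    then show ?thesis using im by (simp add: divide_le_eq)
  qed
  then have bdd: "bdd_above S" by (rule bdd_aboveI)
  define c where "c = Sup S"
  have "cut M x c" unfolding cut_def
  proof (intro conjI allI impI)
    fix i m assume m: "(m::nat) \<ge> 1" and lt: "real_of_int i / real m < c"
    then obtain q where q: "q \<in> S" "real_of_int i / real m < q" using less_cSup_iff[OF Sne bdd] unfolding c_def by blast
    obtain i' m' where im: "q = real_of_int i' / real m'" "m' \<ge> 1" "frac_add x (negF (rp i' m')) \<in> M"
      using q(1) unfolding S_def by blast
    have "real_of_int i * real m' < real_of_int i' * real m" using q im m by (simp add: field_simps)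
    then have "i' * int m - i * int m' \<ge> 0" by (smt (verit) of_int_less_iff of_int_mult of_int_of_nat_eq)
    then have "rp (i' * int m - i * int m') (m' * m) \<in> M" using pc_Pos[OF pM] rp_Pos m im(2) by simp
    then show "frac_add x (negF (rp i m)) \<in> M"
      by (rule pc_eq[OF pM pc_add[OF pM im(3)] Bd_sub[OF x m] I_shift])
  next
    fix i m assume m: "(m::nat) \<ge> 1" and gt: "real_of_int i / real m > c"
    have "frac_add x (negF (rp i m)) \<notin> M"
    proof
      assume "frac_add x (negF (rp i m)) \<in> M"
      then have "real_of_int i / real m \<in> S" unfolding S_def using m by blast
      then have "real_of_int i / real m \<le> c" unfolding c_def using cSup_upper[OF _ bdd] by blast
      then show False using gt by simp
    qed
    then have "negF (frac_add x (negF (rp i m))) \<in> M" using tot[OF Bd_sub[OF x m]] by blast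
    then show "frac_add (rp i m) (negF x) \<in> M"
      by (rule pc_eq[OF pM _ Bd_sub2[OF x m] I_neg])
  qed
  then show ?thesis by blast
qed

end

context porng begin

lemma I_add_l: "frac_eq (frac_add (frac_add x (negF (rp i1 m1))) (frac_add y (negF (rp (i * int m1 - i1 * int m) (m * m1)))))
   (frac_add (frac_add x y) (negF (rp i m)))"
  by (cases x, cases y) (simp add: rp_def frac_eq_def frac_add_def negF_def algebra_simps)

lemma I_add_u: "frac_eq (frac_add (frac_add (rp i1 m1) (negF x)) (frac_add (rp (i * int m1 - i1 * int m) (m * m1)) (negF y)))
   (frac_add (rp i m) (negF (frac_add x y)))"
  by (cases x, cases y) (simp add: rp_def frac_eq_def frac_add_def negF_def algebra_simps)

lemma I_rp1: "frac_add (rp j k) (negF (rp i m)) = (of_int (j * int m - i * int k), of_nat (k * m))"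
  by (simp add: rp_def frac_add_def negF_def algebra_simps)

lemma real_frac_diff: "(m::nat) \<ge> 1 \<Longrightarrow> (m1::nat) \<ge> 1 \<Longrightarrow>
   real_of_int (i * int m1 - i1 * int m) / real (m * m1) = real_of_int i / real m - real_of_int i1 / real m1"
  by (simp add: field_simps)

lemma real_frac_less: "(m::nat) \<ge> 1 \<Longrightarrow> (k::nat) \<ge> 1 \<Longrightarrow>
   real_of_int i / real m < real_of_int j / real k \<longleftrightarrow> i * int k < j * int m"
proof -
  assume "m \<ge> 1" "k \<ge> 1"
  then have "real_of_int i / real m < real_of_int j / real k \<longleftrightarrow> real_of_int i * real k < real_of_int j * real m"
    by (simp add: field_simps)
  also have "\<dots> \<longleftrightarrow> i * int k < j * int m"
    by (metis of_int_less_iff of_int_mult of_int_of_nat_eq)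
  finally show ?thesis .
qed

context
  fixes M assumes M: "cone M"
begin

lemma pM: "precone M" using M unfolding cone_def by blast

lemma cut_eq: assumes c: "cut M x c" and xy: "frac_eq x y" and y: "y \<in> Bd le" shows "cut M y c"
  unfolding cut_def
proof (intro conjI allI impI)
  fix i m assume m: "(m::nat) \<ge> 1"
  { assume "real_of_int i / real m < c"
    then have a: "frac_add x (negF (rp i m)) \<in> M" by (rule cutD1[OF c m])
    show "frac_add y (negF (rp i m)) \<in> M"
      by (rule pc_eq[OF pM a Bd_sub[OF y m] frac_eq_add[OF xy frac_eq_refl]]) }
  { assume "real_of_int i / real m > c"
    then have a: "frac_add (rp i m) (negF x) \<in> M" by (rule cutD2[OF c m])
    have "frac_eq (negF x) (negF y)" using xy unfolding frac_eq_def negF_def by simp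
    then show "frac_add (rp i m) (negF y) \<in> M"
      by (rule pc_eq[OF pM a Bd_sub2[OF y m] frac_eq_add[OF frac_eq_refl]]) }
qed

lemma cut_rp: assumes k: "k \<ge> 1" shows "cut M (rp j k) (real_of_int j / real k)"
  unfolding cut_def
proof (intro conjI allI impI)
  fix i m assume m: "(m::nat) \<ge> 1"
  { assume "real_of_int i / real m < real_of_int j / real k"
    then have lt: "i * int k < j * int m" using real_frac_less[OF m k] by blast
    have "frac_add (rp j k) (negF (rp i m)) \<in> Pos"
      unfolding Pos_def using Bd_sub[OF Bd_rp[OF k] m] pos_of_int[of "j * int m - i * int k"] lt
      unfolding I_rp1 by simp
    then show "frac_add (rp j k) (negF (rp i m)) \<in> M" using pc_Pos[OF pM] by blast }
  { assume "real_of_int i / real m > real_of_int j / real k"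
    then have lt: "j * int m < i * int k" using real_frac_less[OF k m] by blast
    have "frac_add (rp i m) (negF (rp j k)) \<in> Pos"
      unfolding Pos_def using Bd_sub[OF Bd_rp[OF m] k] pos_of_int[of "i * int k - j * int m"] lt
      unfolding I_rp1 by simp
    then show "frac_add (rp i m) (negF (rp j k)) \<in> M" using pc_Pos[OF pM] by blast }
qed

lemma cut_add: assumes a: "cut M x a" and b: "cut M y b" and x: "x \<in> Bd le" and y: "y \<in> Bd le"
  shows "cut M (frac_add x y) (a + b)"
  unfolding cut_def
proof (intro conjI allI impI)
  fix i m assume m: "(m::nat) \<ge> 1"
  { assume lt: "real_of_int i / real m < a + b"
    obtain i1 m1 where 1: "m1 \<ge> 1" "real_of_int i / real m - b < real_of_int i1 / real m1" "real_of_int i1 / real m1 < a"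
      using dense_frac[of "real_of_int i / real m - b" a] lt by auto
    have mm: "m * m1 \<ge> 1" using m 1 by simp
    have "real_of_int (i * int m1 - i1 * int m) / real (m * m1) < b" unfolding real_frac_diff[OF m 1(1)] using 1 by simp
    then have B: "frac_add y (negF (rp (i * int m1 - i1 * int m) (m * m1))) \<in> M" by (rule cutD1[OF b mm])
    have A: "frac_add x (negF (rp i1 m1)) \<in> M" by (rule cutD1[OF a 1(1) 1(3)])
    show "frac_add (frac_add x y) (negF (rp i m)) \<in> M"
      by (rule pc_eq[OF pM pc_add[OF pM A B] Bd_sub[OF Bd_add[OF x y] m] I_add_l]) }
  { assume gt: "real_of_int i / real m > a + b"
    obtain i1 m1 where 1: "m1 \<ge> 1" "a < real_of_int i1 / real m1" "real_of_int i1 / real m1 < real_of_int i / real m - b"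
      using dense_frac[of a "real_of_int i / real m - b"] gt by auto
    have mm: "m * m1 \<ge> 1" using m 1 by simp
    have "real_of_int (i * int m1 - i1 * int m) / real (m * m1) > b" unfolding real_frac_diff[OF m 1(1)] using 1 by simp
    then have B: "frac_add (rp (i * int m1 - i1 * int m) (m * m1)) (negF y) \<in> M" by (rule cutD2[OF b mm])
    have A: "frac_add (rp i1 m1) (negF x) \<in> M" by (rule cutD2[OF a 1(1) 1(2)])
    show "frac_add (rp i m) (negF (frac_add x y)) \<in> M"
      by (rule pc_eq[OF pM pc_add[OF pM A B] Bd_sub2[OF Bd_add[OF x y] m] I_add_u]) }
qed

lemma cut_nonneg: assumes c: "cut M x c" and x: "x \<in> M" shows "c \<ge> 0"
proof (rule ccontr)
  assume "\<not> c \<ge> 0"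
  then obtain i m where im: "m \<ge> 1" "c < real_of_int i / real m" "real_of_int i / real m < 0"
    using dense_frac[of c 0] by auto
  have A: "frac_add (rp i m) (negF x) \<in> M" by (rule cutD2[OF c im(1) im(2)])
  have "rp i m \<in> M" by (rule pc_eq[OF pM pc_add[OF pM A x] Bd_rp[OF im(1)] I_back])
  then have "i \<ge> 0" by (rule cone_rp[OF M im(1)])
  then show False using im by (simp add: divide_less_0_iff)
qed

end

end

lemma rl1: "(b::real) > 0 \<Longrightarrow> a > 0 \<Longrightarrow> q < a * b \<Longrightarrow> max 0 (q / b) < a" by (simp add: pos_divide_less_eq)
lemma rl2: "(b::real) > 0 \<Longrightarrow> q / b < q1 \<Longrightarrow> q < q1 * b" by (simp add: pos_divide_less_eq)
lemma rl3: "(q1::real) > 0 \<Longrightarrow> b > 0 \<Longrightarrow> q < q1 * b \<Longrightarrow> max 0 (q / q1) < b" by (simp add: pos_divide_less_eq mult.commute)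
lemma rl4: "(q1::real) > 0 \<Longrightarrow> q / q1 < q2 \<Longrightarrow> q < q1 * q2" by (simp add: pos_divide_less_eq mult.commute)
lemma ru1: "(b::real) > 0 \<Longrightarrow> a * b < q \<Longrightarrow> a < q / b" by (simp add: pos_less_divide_eq)
lemma ru2: "(b::real) > 0 \<Longrightarrow> q1 < q / b \<Longrightarrow> q1 * b < q" by (simp add: pos_less_divide_eq)
lemma ru3: "(q1::real) > 0 \<Longrightarrow> q1 * b < q \<Longrightarrow> b < q / q1" by (simp add: pos_less_divide_eq mult.commute)
lemma ru4: "(q1::real) > 0 \<Longrightarrow> q2 < q / q1 \<Longrightarrow> q1 * q2 < q" by (simp add: pos_less_divide_eq mult.commute)

context porng begin

lemma I_mul_l: "frac_eq
  (frac_add (frac_add (frac_add (frac_mul (frac_add x (negF (rp i1 m1))) (frac_add y (negF (rp i2 m2))))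
       (frac_mul (rp i1 m1) (frac_add y (negF (rp i2 m2))))) (frac_mul (rp i2 m2) (frac_add x (negF (rp i1 m1)))))
     (rp (i1 * i2 * int m - i * int m1 * int m2) (m1 * m2 * m)))
  (frac_add (frac_mul x y) (negF (rp i m)))"
  by (cases x, cases y) (simp add: rp_def frac_eq_def frac_add_def frac_mul_def negF_def algebra_simps)

lemma I_mul_u: "frac_eq
  (frac_add (frac_add (frac_mul (rp i1 m1) (frac_add (rp i2 m2) (negF y))) (frac_mul y (frac_add (rp i1 m1) (negF x))))
     (rp (i * int m1 * int m2 - i1 * i2 * int m) (m * m1 * m2)))
  (frac_add (rp i m) (negF (frac_mul x y)))"
  by (cases x, cases y) (simp add: rp_def frac_eq_def frac_add_def frac_mul_def negF_def algebra_simps)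

lemma I_y: "frac_eq (frac_add (frac_add y (negF (rp j k))) (rp j k)) y"
  by (cases y) (simp add: rp_def frac_eq_def frac_add_def negF_def algebra_simps)

lemma real3: "(m::nat) \<ge> 1 \<Longrightarrow> (m1::nat) \<ge> 1 \<Longrightarrow> (m2::nat) \<ge> 1 \<Longrightarrow>
  real_of_int i / real m < (real_of_int i1 / real m1) * (real_of_int i2 / real m2) \<Longrightarrow>
  i1 * i2 * int m - i * int m1 * int m2 \<ge> 0"
proof -
  assume m: "m \<ge> 1" "m1 \<ge> 1" "m2 \<ge> 1" and lt: "real_of_int i / real m < (real_of_int i1 / real m1) * (real_of_int i2 / real m2)"
  then have "real_of_int i * (real m1 * real m2) < real_of_int i1 * real_of_int i2 * real m"
    by (simp add: field_simps)
  then have "of_int (i * (int m1 * int m2)) < (of_int (i1 * i2 * int m) :: real)" by simp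
  then show ?thesis by linarith
qed

lemma real3': "(m::nat) \<ge> 1 \<Longrightarrow> (m1::nat) \<ge> 1 \<Longrightarrow> (m2::nat) \<ge> 1 \<Longrightarrow>
  real_of_int i / real m > (real_of_int i1 / real m1) * (real_of_int i2 / real m2) \<Longrightarrow>
  i * int m1 * int m2 - i1 * i2 * int m \<ge> 0"
proof -
  assume m: "m \<ge> 1" "m1 \<ge> 1" "m2 \<ge> 1" and lt: "real_of_int i / real m > (real_of_int i1 / real m1) * (real_of_int i2 / real m2)"
  then have "real_of_int i * (real m1 * real m2) > real_of_int i1 * real_of_int i2 * real m"
    by (simp add: field_simps)
  then have "of_int (i * (int m1 * int m2)) > (of_int (i1 * i2 * int m) :: real)" by simp
  then show ?thesis by linarith
qed

context
  fixes M assumes M: "cone M"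
begin

lemma cut_mul_pos: assumes a: "cut M x a" and b: "cut M y b" and x: "x \<in> Bd le" and y: "y \<in> Bd le"
  and a0: "a > 0" and b0: "b > 0"
  shows "cut M (frac_mul x y) (a * b)"
  unfolding cut_def
proof (intro conjI allI impI)
  have pM: "precone M" by (rule pM[OF M])
  fix i m assume m: "(m::nat) \<ge> 1"
  let ?q = "real_of_int i / real m"
  { assume lt: "?q < a * b"
    have "max 0 (?q / b) < a" by (rule rl1[OF b0 a0 lt])
    then obtain i1 m1 where 1: "m1 \<ge> 1" "max 0 (?q / b) < real_of_int i1 / real m1" "real_of_int i1 / real m1 < a"
      using dense_frac by blast
    let ?q1 = "real_of_int i1 / real m1"
    have q1a: "?q1 > 0" "?q / b < ?q1" using 1 by auto
    have q1: "?q1 > 0" "?q < ?q1 * b" using q1a(1) rl2[OF b0 q1a(2)] by auto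
    have "max 0 (?q / ?q1) < b" by (rule rl3[OF q1(1) b0 q1(2)])
    then obtain i2 m2 where 2: "m2 \<ge> 1" "max 0 (?q / ?q1) < real_of_int i2 / real m2" "real_of_int i2 / real m2 < b"
      using dense_frac by blast
    let ?q2 = "real_of_int i2 / real m2"
    have q2a: "?q / ?q1 < ?q2" "?q2 > 0" using 2 by auto
    have q2: "?q2 > 0" "?q < ?q1 * ?q2" using q2a(2) rl4[OF q1(1) q2a(1)] by auto
    have i1: "i1 \<ge> 0" using rp_pos_real[OF 1(1)] q1 by simp
    have i2: "i2 \<ge> 0" using rp_pos_real[OF 2(1)] q2 by simp
    have X1: "frac_add x (negF (rp i1 m1)) \<in> M" by (rule cutD1[OF a 1(1) 1(3)])
    have Y1: "frac_add y (negF (rp i2 m2)) \<in> M" by (rule cutD1[OF b 2(1) 2(3)])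
    have R1: "rp i1 m1 \<in> M" using pc_Pos[OF pM rp_Pos[OF 1(1) i1]] .
    have R2: "rp i2 m2 \<in> M" using pc_Pos[OF pM rp_Pos[OF 2(1) i2]] .
    have mm: "m1 * m2 * m \<ge> 1" using m 1 2 by simp
    have R3: "rp (i1 * i2 * int m - i * int m1 * int m2) (m1 * m2 * m) \<in> M"
      using pc_Pos[OF pM rp_Pos[OF mm real3[OF m 1(1) 2(1) q2(2)]]] .
    show "frac_add (frac_mul x y) (negF (rp i m)) \<in> M"
      by (rule pc_eq[OF pM pc_add[OF pM pc_add[OF pM pc_add[OF pM pc_mul[OF pM X1 Y1] pc_mul[OF pM R1 Y1]] pc_mul[OF pM R2 X1]] R3]
          Bd_sub[OF Bd_mul[OF x y] m] I_mul_l]) }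
  { assume gt: "?q > a * b"
    have "a < ?q / b" by (rule ru1[OF b0 gt])
    then obtain i1 m1 where 1: "m1 \<ge> 1" "a < real_of_int i1 / real m1" "real_of_int i1 / real m1 < ?q / b"
      using dense_frac by blast
    let ?q1 = "real_of_int i1 / real m1"
    have q1: "?q1 > 0" "?q1 * b < ?q" using 1(2) a0 ru2[OF b0 1(3)] by auto
    have "b < ?q / ?q1" by (rule ru3[OF q1(1) q1(2)])
    then obtain i2 m2 where 2: "m2 \<ge> 1" "b < real_of_int i2 / real m2" "real_of_int i2 / real m2 < ?q / ?q1"
      using dense_frac by blast
    let ?q2 = "real_of_int i2 / real m2"
    have q2: "?q1 * ?q2 < ?q" by (rule ru4[OF q1(1) 2(3)])
    have "?q1 \<ge> 0" using q1 by simp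
    then have i1: "i1 \<ge> 0" using rp_pos_real[OF 1(1)] by simp
    obtain j k where jk: "k \<ge> 1" "0 < real_of_int j / real k" "real_of_int j / real k < b"
      using dense_frac[OF b0] by blast
    have j: "j \<ge> 0" using rp_pos_real[OF jk(1)] jk(2) by simp
    have yM: "y \<in> M"
      by (rule pc_eq[OF pM pc_add[OF pM cutD1[OF b jk(1) jk(3)] pc_Pos[OF pM rp_Pos[OF jk(1) j]]] y I_y])
    have X2: "frac_add (rp i1 m1) (negF x) \<in> M" by (rule cutD2[OF a 1(1) 1(2)])
    have Y2: "frac_add (rp i2 m2) (negF y) \<in> M" by (rule cutD2[OF b 2(1) 2(2)])
    have R1: "rp i1 m1 \<in> M" using pc_Pos[OF pM rp_Pos[OF 1(1) i1]] .
    have mm: "m * m1 * m2 \<ge> 1" using m 1 2 by simp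
    have R3: "rp (i * int m1 * int m2 - i1 * i2 * int m) (m * m1 * m2) \<in> M"
      using pc_Pos[OF pM rp_Pos[OF mm real3'[OF m 1(1) 2(1) q2]]] .
    show "frac_add (rp i m) (negF (frac_mul x y)) \<in> M"
      by (rule pc_eq[OF pM pc_add[OF pM pc_add[OF pM pc_mul[OF pM R1 Y2] pc_mul[OF pM yM X2]] R3]
          Bd_sub2[OF Bd_mul[OF x y] m] I_mul_u]) }
qed

end

end

context porng begin

definition phiM where "phiM M x = (if x \<in> Bd le then (SOME c. cut M x c) else 0)"

lemma I_scale: "frac_eq (frac_mul (of_nat (Suc k), 1) z) (frac_add (frac_mul (of_nat k, 1) z) z)"
  by (cases z) (simp add: frac_eq_def frac_add_def frac_mul_def algebra_simps)

lemma I_scale0: "frac_eq (frac_mul (of_nat 0, 1) z) (rp 0 1)"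
  by (cases z) (simp add: rp_def frac_eq_def frac_mul_def)

lemma I_shiftmul: "frac_eq (frac_mul (frac_add x (of_nat k, 1)) (frac_add y (of_nat k, 1)))
   (frac_add (frac_mul x y) (frac_mul (of_nat k, 1) (frac_add (frac_add x y) (of_nat k, 1))))"
  by (cases x, cases y) (simp add: frac_eq_def frac_add_def frac_mul_def algebra_simps)

lemma rp_nat: "rp (int k) 1 = (of_nat k, 1)" unfolding rp_def by simp

context
  fixes M assumes M: "cone M" and tot: "\<And>y. y \<in> Bd le \<Longrightarrow> y \<in> M \<or> negF y \<in> M"
begin

lemma phi_cut: "x \<in> Bd le \<Longrightarrow> cut M x (phiM M x)"
  unfolding phiM_def using cut_exists[OF M tot] by (simp add: someI_ex)

lemma phi_eqI: "x \<in> Bd le \<Longrightarrow> cut M x c \<Longrightarrow> phiM M x = c"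
  using cut_unique[OF M phi_cut] by blast

lemma phi_eq: "x \<in> Bd le \<Longrightarrow> y \<in> Bd le \<Longrightarrow> frac_eq x y \<Longrightarrow> phiM M x = phiM M y"
  using phi_eqI cut_eq[OF M phi_cut] by metis

lemma phi_rp: "k \<ge> 1 \<Longrightarrow> phiM M (rp j k) = real_of_int j / real k"
  using phi_eqI[OF Bd_rp cut_rp[OF M]] by blast

lemma phi_nat: "phiM M (of_nat k, 1) = real k"
  using phi_rp[of 1 "int k"] unfolding rp_nat by simp

lemma phi_add: "x \<in> Bd le \<Longrightarrow> y \<in> Bd le \<Longrightarrow> phiM M (frac_add x y) = phiM M x + phiM M y"
  by (rule phi_eqI[OF Bd_add cut_add[OF M phi_cut phi_cut]])

lemma phi_scale: assumes z: "z \<in> Bd le" shows "phiM M (frac_mul (of_nat k, 1) z) = real k * phiM M z"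
proof (induction k)
  case 0
  have "phiM M (frac_mul (of_nat 0, 1) z) = phiM M (rp 0 1)"
    by (rule phi_eq[OF Bd_mul[OF Bd_nat1 z] Bd_rp I_scale0]) simp
  then show ?case using phi_rp[of 1 0] by simp
next
  case (Suc k)
  have "phiM M (frac_mul (of_nat (Suc k), 1) z) = phiM M (frac_add (frac_mul (of_nat k, 1) z) z)"
    by (rule phi_eq[OF Bd_mul[OF Bd_nat1 z] Bd_add[OF Bd_mul[OF Bd_nat1 z] z] I_scale])
  also have "\<dots> = real k * phiM M z + phiM M z" using phi_add[OF Bd_mul[OF Bd_nat1 z] z] Suc by simp
  finally show ?case by (simp add: algebra_simps)
qed

lemma phi_mul_pos: "x \<in> Bd le \<Longrightarrow> y \<in> Bd le \<Longrightarrow> phiM M x > 0 \<Longrightarrow> phiM M y > 0 \<Longrightarrow>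
   phiM M (frac_mul x y) = phiM M x * phiM M y"
  by (rule phi_eqI[OF Bd_mul cut_mul_pos[OF M phi_cut phi_cut]])

lemma phi_mul: assumes x: "x \<in> Bd le" and y: "y \<in> Bd le"
  shows "phiM M (frac_mul x y) = phiM M x * phiM M y"
proof -
  define a where "a = phiM M x"
  define b where "b = phiM M y"
  define k where "k = nat \<lceil>\<bar>a\<bar> + \<bar>b\<bar>\<rceil> + 1"
  have ka: "a + real k > 0" and kb: "b + real k > 0" unfolding k_def by linarith+
  let ?K = "(of_nat k, 1) :: 'a \<times> 'a"
  have X: "frac_add x ?K \<in> Bd le" and Y: "frac_add y ?K \<in> Bd le" using Bd_add Bd_nat1 x y by blast+
  have pX: "phiM M (frac_add x ?K) = a + real k" using phi_add[OF x Bd_nat1] phi_nat unfolding a_def by simp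
  have pY: "phiM M (frac_add y ?K) = b + real k" using phi_add[OF y Bd_nat1] phi_nat unfolding b_def by simp
  have "phiM M (frac_mul (frac_add x ?K) (frac_add y ?K)) = (a + real k) * (b + real k)"
    using phi_mul_pos[OF X Y] pX pY ka kb by simp
  moreover have B1: "frac_add (frac_add x y) ?K \<in> Bd le" using Bd_add Bd_nat1 x y by blast
  have "phiM M (frac_mul (frac_add x ?K) (frac_add y ?K)) =
     phiM M (frac_add (frac_mul x y) (frac_mul ?K (frac_add (frac_add x y) ?K)))"
    by (rule phi_eq[OF Bd_mul[OF X Y] Bd_add[OF Bd_mul[OF x y] Bd_mul[OF Bd_nat1 B1]] I_shiftmul])
  also have "\<dots> = phiM M (frac_mul x y) + real k * (a + b + real k)"
    using phi_add[OF Bd_mul[OF x y] Bd_mul[OF Bd_nat1 B1]] phi_scale[OF B1] phi_add[OF Bd_add[OF x y] Bd_nat1]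
      phi_add[OF x y] phi_nat unfolding a_def b_def by simp
  ultimately have "phiM M (frac_mul x y) = (a + real k) * (b + real k) - real k * (a + b + real k)" by simp
  then show ?thesis unfolding a_def b_def by (simp add: algebra_simps)
qed

lemma phi_Kset: "phiM M \<in> Kset le"
proof -
  have pM: "precone M" using M unfolding cone_def by blast
  have fl: "frac_le le (0, 1) x \<longleftrightarrow> pos (fst x)" for x unfolding frac_le_def by simp
  have pos: "phiM M x \<ge> 0" if "x \<in> Bd le" "pos (fst x)" for x
    using cut_nonneg[OF M phi_cut[OF that(1)] pc_posI[OF pM that]] .
  have one: "phiM M (1, 1) = 1" using phi_nat[of 1] by simp
  show ?thesis unfolding Kset_def mem_Collect_eq fl
    using phi_eq phi_add phi_mul pos one by (auto simp: phiM_def)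
qed

lemma phi_M_nonneg: "x \<in> M \<Longrightarrow> phiM M x \<ge> 0"
  using cut_nonneg[OF M phi_cut] pc_Bd[OF pM[OF M]] by blast

end

lemma KD_main: assumes ru: "(r, u) \<in> Bd le" and allp: "\<forall>\<phi>\<in>Kset le. \<phi> (r, u) \<ge> 0" and n: "n \<ge> 1"
  shows "pos (of_nat n * r + u)"
proof (rule ccontr)
  assume np: "\<not> pos (of_nat n * r + u)"
  define f where "f = frac_add (r, u) (1, of_nat n)"
  have fB: "f \<in> Bd le" unfolding f_def by (rule Bd_add[OF ru Bd_one_s[OF Loc_nat[OF n]]])
  have ff: "fst f = of_nat n * r + u" unfolding f_def frac_add_def by (simp add: algebra_simps)
  have pe: "precone (ext Pos (negF f))" using precone_ext[OF precone_Pos Bd_neg[OF fB]] by blast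
  have "(- 1, 1) \<notin> ext Pos (negF f)"
  proof
    assume "(- 1, 1) \<in> ext Pos (negF f)"
    then have "pos (fst f)" by (rule arch[OF fB])
    then show False using np ff by simp
  qed
  then obtain M where M: "cone M" "ext Pos (negF f) \<subseteq> M" "\<And>Q. cone Q \<Longrightarrow> M \<subseteq> Q \<Longrightarrow> Q = M"
    using max_cone[OF pe] by blast
  have tot: "\<And>y. y \<in> Bd le \<Longrightarrow> y \<in> M \<or> negF y \<in> M" using total[OF M(1) M(3)] by blast
  have nfM: "negF f \<in> M" using M(2) precone_ext(3)[OF precone_Pos Bd_neg[OF fB]] by blast
  have K: "phiM M \<in> Kset le" by (rule phi_Kset[OF M(1) tot])
  have "phiM M (negF f) \<ge> 0" by (rule phi_M_nonneg[OF M(1) tot nfM])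
  then have "phiM M f \<le> 0" using K_neg[OF K fB] by simp
  moreover have "phiM M f = phiM M (r, u) + 1 / real n"
    unfolding f_def using K_add[OF K ru Bd_one_s[OF Loc_nat[OF n]]] K_inv_nat[OF K n] by simp
  moreover have "phiM M (r, u) \<ge> 0" using allp K by blast
  moreover have "1 / real n > 0" using n by simp
  ultimately show False by linarith
qed

end

lemma real_arch_lin: fixes \<alpha> \<beta> :: real assumes "\<forall>k::nat. k \<ge> 1 \<longrightarrow> real k * \<alpha> + \<beta> \<ge> 0" shows "\<alpha> \<ge> 0"
proof (rule ccontr)
  assume "\<not> \<alpha> \<ge> 0"
  then have a: "\<alpha> < 0" by simp
  define k where "k = nat \<lceil>\<beta> / (- \<alpha>)\<rceil> + 1"
  have k1: "k \<ge> 1" unfolding k_def by simp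
  have kk: "\<beta> / (- \<alpha>) < real k" unfolding k_def by linarith
  have na: "- \<alpha> > 0" using a by simp
  have "real k * (- \<alpha>) > \<beta>" using pos_divide_less_eq[OF na, of \<beta> "real k"] kk by blast
  then have "real k * \<alpha> + \<beta> < 0" by (simp add: algebra_simps)
  then show False using assms k1 by force
qed

context porng begin

lemma gelfand_iff: "gelfand_nonneg le r \<longleftrightarrow> r \<in> ddagger_pos le"
proof -
  define s0 where "s0 = gelfand_s le r"
  have s0: "s0 \<in> Loc le" "(r, s0) \<in> Bd le" using gelfand_s unfolding s0_def by auto
  have gn: "gelfand_nonneg le r \<longleftrightarrow> (\<exists>t\<in>Loc le. Ofin le t \<subseteq> Ofin le s0 \<and>
       (\<forall>\<phi>\<in>Ofin le t. inverse (\<phi> (1, s0)) * \<phi> (r, s0) \<ge> 0))"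
    unfolding gelfand_nonneg_def C_approx_nonneg_def Dloc_def gelfand_fun_def s0_def by blast
  have mul1: "frac_mul (1, s) (1, t) = (1, s * t)" for s t :: 'a unfolding frac_mul_def by simp
  have mulr: "frac_mul (r, s0) (1, t) = (r, s0 * t)" for t :: 'a unfolding frac_mul_def by simp
  show ?thesis
  proof
    assume "gelfand_nonneg le r"
    then obtain t where t: "t \<in> Loc le" "Ofin le t \<subseteq> Ofin le s0"
      "\<And>\<phi>. \<phi> \<in> Ofin le t \<Longrightarrow> inverse (\<phi> (1, s0)) * \<phi> (r, s0) \<ge> 0" using gn by blast
    have B: "(r, s0 * t) \<in> Bd le" using Bd_mul[OF s0(2) Bd_one_s[OF t(1)]] unfolding mulr .
    have "\<phi> (r, s0 * t) \<ge> 0" if K: "\<phi> \<in> Kset le" for \<phi>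
    proof -
      have e: "\<phi> (r, s0 * t) = \<phi> (r, s0) * \<phi> (1, t)"
        using K_mul[OF K s0(2) Bd_one_s[OF t(1)]] unfolding mulr .
      show ?thesis
      proof (cases "\<phi> (1, t) = 0")
        case True then show ?thesis using e by simp
      next
        case False
        then have pt: "\<phi> (1, t) > 0" using K_1s_pos[OF K t(1)] by linarith
        then have "\<phi> \<in> Ofin le t" unfolding Ofin_def using K by blast
        then have "\<phi> \<in> Ofin le s0" "inverse (\<phi> (1, s0)) * \<phi> (r, s0) \<ge> 0" using t by blast+
        then have "\<phi> (1, s0) > 0" "inverse (\<phi> (1, s0)) * \<phi> (r, s0) \<ge> 0" unfolding Ofin_def by auto
        then have "\<phi> (r, s0) \<ge> 0" by (simp add: zero_le_mult_iff)
        then show ?thesis using e pt by simp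
      qed
    qed
    then have "pos (of_nat k * r + s0 * t)" if "k \<ge> 1" for k
      using KD_main[OF B _ that] by blast
    then show "r \<in> ddagger_pos le" unfolding ddagger_pos_def by blast
  next
    assume "r \<in> ddagger_pos le"
    then obtain h where h: "\<And>k::nat. k \<ge> 1 \<Longrightarrow> pos (of_nat k * r + h)" unfolding ddagger_pos_def by blast
    obtain t where t: "t \<in> Loc le" "le (- t) h" "le h t" using locz unfolding localizable_def by blast
    have ht: "(h, t) \<in> Bd le" by (rule Bd_r_s[OF t])
    have st: "s0 * t \<in> Loc le" by (rule Loc_mult[OF s0(1) t(1)])
    have B1: "(1, s0) \<in> Bd le" "(1, t) \<in> Bd le" using Bd_one_s s0 t by auto
    have "Ofin le (s0 * t) \<subseteq> Ofin le s0 \<and> (\<forall>\<phi>\<in>Ofin le (s0 * t). inverse (\<phi> (1, s0)) * \<phi> (r, s0) \<ge> 0)"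
    proof (intro conjI ballI subsetI)
      fix \<phi> assume "\<phi> \<in> Ofin le (s0 * t)"
      then have K: "\<phi> \<in> Kset le" and p: "\<phi> (1, s0 * t) > 0" unfolding Ofin_def by auto
      have "\<phi> (1, s0 * t) = \<phi> (1, s0) * \<phi> (1, t)" using K_mul[OF K B1] unfolding mul1 .
      moreover have "\<phi> (1, s0) \<ge> 0" "\<phi> (1, t) \<ge> 0" using K_1s_pos[OF K] s0 t by auto
      ultimately have p1: "\<phi> (1, s0) > 0" and p2: "\<phi> (1, t) > 0" using p
        by (metis less_eq_real_def mult_zero_left mult_zero_right)+
      then show "\<phi> \<in> Ofin le s0" unfolding Ofin_def using K by blast
      have "real k * (\<phi> (r, s0) * \<phi> (1, t)) + \<phi> (1, s0) * \<phi> (h, t) \<ge> 0" if k: "k \<ge> 1" for k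
      proof -
        define z where "z = frac_add (frac_mul (of_nat k, 1) (frac_mul (r, s0) (1, t))) (frac_mul (1, s0) (h, t))"
        have zB: "z \<in> Bd le" unfolding z_def
          by (rule Bd_add[OF Bd_mul[OF Bd_nat1 Bd_mul[OF s0(2) B1(2)]] Bd_mul[OF B1(1) ht]])
        have "fst z = (of_nat k * r + h) * (s0 * t)" unfolding z_def frac_add_def frac_mul_def by (simp add: algebra_simps)
        then have "pos (fst z)" using pos_mult[OF h[OF k] Loc_pos[OF st]] by simp
        then have "\<phi> z \<ge> 0" by (rule K_pos[OF K zB])
        moreover have "\<phi> z = real k * (\<phi> (r, s0) * \<phi> (1, t)) + \<phi> (1, s0) * \<phi> (h, t)"
          unfolding z_def
          using K_add[OF K Bd_mul[OF Bd_nat1 Bd_mul[OF s0(2) B1(2)]] Bd_mul[OF B1(1) ht]]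
            K_mul[OF K Bd_nat1 Bd_mul[OF s0(2) B1(2)]] K_mul[OF K s0(2) B1(2)] K_mul[OF K B1(1) ht] K_nat[OF K]
          by simp
        ultimately show ?thesis by simp
      qed
      then have "\<phi> (r, s0) * \<phi> (1, t) \<ge> 0" using real_arch_lin by blast
      then have "\<phi> (r, s0) \<ge> 0" using p2 by (simp add: zero_le_mult_iff)
      then show "inverse (\<phi> (1, s0)) * \<phi> (r, s0) \<ge> 0" using p1 by simp
    qed
    then show "gelfand_nonneg le r" using gn st by blast
  qed
qed

end

abbreviation PT :: "('b \<Rightarrow> real) topology" where "PT \<equiv> product_topology (\<lambda>_. euclideanreal) UNIV"

lemma PT_top: "topspace PT = UNIV" by simp

lemma PT_proj: "continuous_map PT euclideanreal (\<lambda>\<phi>. \<phi> x)"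
  by (rule continuous_map_product_projection) simp

lemma cl_eq: "continuous_map PT euclideanreal g \<Longrightarrow> closedin PT {\<phi>. g \<phi> = c}"
  using closedin_continuous_map_preimage[of PT euclideanreal g "{c}"] by (simp add: closed_closedin[symmetric])

lemma cl_eq2: assumes "continuous_map PT euclideanreal g" "continuous_map PT euclideanreal h"
  shows "closedin PT {\<phi>. g \<phi> = h \<phi>}"
proof -
  have "closedin PT {\<phi>. g \<phi> - h \<phi> = 0}" by (rule cl_eq[OF continuous_map_diff[OF assms]])
  then show ?thesis by simp
qed

lemma cl_ge: "continuous_map PT euclideanreal g \<Longrightarrow> closedin PT {\<phi>. g \<phi> \<ge> 0}"
  using closedin_continuous_map_preimage[of PT euclideanreal g "{0..}"] by (simp add: closed_closedin[symmetric])

lemma cl_Inter: "(\<And>S. S \<in> K \<Longrightarrow> closedin PT S) \<Longrightarrow> closedin PT (\<Inter>K)"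
proof (cases "K = {}")
  case True then show ?thesis using closedin_topspace[of PT] by simp
next
  case False then show "(\<And>S. S \<in> K \<Longrightarrow> closedin PT S) \<Longrightarrow> ?thesis" by (rule closedin_Inter)
qed

context porng begin

lemma Kset_closed: "closedin PT (Kset le)"
proof -
  define A1 :: "('a \<times> 'a \<Rightarrow> real) set" where "A1 = \<Inter> ((\<lambda>x. {\<phi>. \<phi> x = 0}) ` (- Bd le))"
  define A2 :: "('a \<times> 'a \<Rightarrow> real) set" where "A2 = \<Inter> ((\<lambda>(x,y). {\<phi>. \<phi> x = \<phi> y}) ` {(x,y). x \<in> Bd le \<and> y \<in> Bd le \<and> frac_eq x y})"
  define A3 :: "('a \<times> 'a \<Rightarrow> real) set" where "A3 = {\<phi>. \<phi> (1, 1) = (1::real)}"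
  define A4 :: "('a \<times> 'a \<Rightarrow> real) set" where "A4 = \<Inter> ((\<lambda>(x,y). {\<phi>. \<phi> (frac_add x y) = \<phi> x + \<phi> y}) ` (Bd le \<times> Bd le))"
  define A5 :: "('a \<times> 'a \<Rightarrow> real) set" where "A5 = \<Inter> ((\<lambda>(x,y). {\<phi>. \<phi> (frac_mul x y) = \<phi> x * \<phi> y}) ` (Bd le \<times> Bd le))"
  define A6 :: "('a \<times> 'a \<Rightarrow> real) set" where "A6 = \<Inter> ((\<lambda>x. {\<phi>. \<phi> x \<ge> 0}) ` {x \<in> Bd le. frac_le le (0, 1) x})"
  have "Kset le = A1 \<inter> A2 \<inter> A3 \<inter> A4 \<inter> A5 \<inter> A6"
    unfolding Kset_def A1_def A2_def A3_def A4_def A5_def A6_def by auto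
  moreover have "closedin PT A1" unfolding A1_def by (rule cl_Inter) (auto intro!: cl_eq PT_proj)
  moreover have "closedin PT A2" unfolding A2_def by (rule cl_Inter) (auto intro!: cl_eq2 PT_proj)
  moreover have "closedin PT A3" unfolding A3_def by (rule cl_eq PT_proj)+
  moreover have "closedin PT A4" unfolding A4_def by (rule cl_Inter) (auto intro!: cl_eq2 PT_proj continuous_map_add)
  moreover have "closedin PT A5" unfolding A5_def by (rule cl_Inter) (auto intro!: cl_eq2 PT_proj continuous_map_real_mult)
  moreover have "closedin PT A6" unfolding A6_def by (rule cl_Inter) (auto intro!: cl_ge PT_proj)
  ultimately show ?thesis by (simp add: closedin_Int)
qed

definition bnd where "bnd x = (SOME n::nat. pos (fst x + of_nat n * snd x) \<and> pos (of_nat n * snd x - fst x))"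

lemma Kset_bound: assumes K: "\<phi> \<in> Kset le" shows "\<phi> x \<in> {- real (bnd x) .. real (bnd x)}"
proof (cases "x \<in> Bd le")
  case False then show ?thesis using K_off[OF K] by simp
next
  case True
  then have "\<exists>n::nat. pos (fst x + of_nat n * snd x) \<and> pos (of_nat n * snd x - fst x)" unfolding Bd_iff by blast
  then have "pos (fst x + of_nat (bnd x) * snd x) \<and> pos (of_nat (bnd x) * snd x - fst x)"
    unfolding bnd_def by (rule someI_ex)
  then have n: "pos (fst x + of_nat (bnd x) * snd x)" "pos (of_nat (bnd x) * snd x - fst x)" by blast+
  let ?N = "(of_nat (bnd x), 1) :: 'a \<times> 'a"
  have "fst (frac_add x ?N) = fst x + of_nat (bnd x) * snd x" unfolding frac_add_def by simp
  then have "\<phi> (frac_add x ?N) \<ge> 0" using K_pos[OF K Bd_add[OF True Bd_nat1]] n(1) by simp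
  then have 1: "\<phi> x + real (bnd x) \<ge> 0" using K_add[OF K True Bd_nat1] K_nat[OF K] by simp
  have "fst (frac_add ?N (negF x)) = of_nat (bnd x) * snd x - fst x" unfolding frac_add_def negF_def by simp
  then have "\<phi> (frac_add ?N (negF x)) \<ge> 0" using K_pos[OF K Bd_add[OF Bd_nat1 Bd_neg[OF True]]] n(2) by simp
  then have 2: "real (bnd x) - \<phi> x \<ge> 0" using K_add[OF K Bd_nat1 Bd_neg[OF True]] K_nat[OF K] K_neg[OF K True] by simp
  show ?thesis using 1 2 by simp
qed

lemma Kset_compactin: "compactin PT (Kset le)"
proof (rule closed_compactin[OF _ _ Kset_closed])
  show "compactin PT (PiE UNIV (\<lambda>x. {- real (bnd x) .. real (bnd x)}))"
    by (simp add: compactin_PiE)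
  show "Kset le \<subseteq> PiE UNIV (\<lambda>x. {- real (bnd x) .. real (bnd x)})"
    using Kset_bound unfolding PiE_UNIV_domain by blast
qed

lemma Ktop_eq: "Ktop le = subtopology PT (Kset le)"
proof -
  define S where "S = {{\<phi> \<in> Kset le. \<phi> x \<in> V} | x V. x \<in> Bd le \<and> open V}"
  have Kt: "Ktop le = topology_generated_by S" unfolding Ktop_def S_def ..
  have top: "topspace (Ktop le) = Kset le"
  proof -
    have "{\<phi> \<in> Kset le. \<phi> (1, 1) \<in> UNIV} \<in> S" unfolding S_def using Bd_1 open_UNIV by blast
    then have "Kset le \<subseteq> \<Union>S" by auto
    moreover have "\<Union>S \<subseteq> Kset le" unfolding S_def by auto
    ultimately show ?thesis unfolding Kt topology_generated_by_topspace by (rule equalityI[rotated])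
  qed
  have coordU: "openin (Ktop le) {\<phi> \<in> topspace (Ktop le). \<phi> x \<in> U}" if U: "open U" for x and U :: "real set"
  proof (cases "x \<in> Bd le")
    case True
    have "{\<phi> \<in> Kset le. \<phi> x \<in> U} \<in> S" unfolding S_def using True U by blast
    then show ?thesis unfolding top unfolding Kt by (rule topology_generated_by_Basis)
  next
    case False
    have z: "\<forall>\<phi>\<in>Kset le. \<phi> x = 0" using K_off False by blast
    show ?thesis
    proof (cases "0 \<in> U")
      case True
      then have "{\<phi> \<in> topspace (Ktop le). \<phi> x \<in> U} = topspace (Ktop le)" unfolding top using z by auto
      then show ?thesis by (simp only: openin_topspace)
    next
      case False
      then have "{\<phi> \<in> topspace (Ktop le). \<phi> x \<in> U} = {}" unfolding top using z by auto
      then show ?thesis by (simp only: openin_empty)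
    qed
  qed
  have coord: "continuous_map (Ktop le) euclideanreal (\<lambda>\<phi>. \<phi> x)" for x
    unfolding continuous_map_def
  proof (rule conjI)
    show "(\<lambda>\<phi>. \<phi> x) \<in> topspace (Ktop le) \<rightarrow> topspace euclideanreal"
      by (rule funcsetI) (simp only: topspace_euclidean UNIV_I)
    show "\<forall>U. openin euclideanreal U \<longrightarrow> openin (Ktop le) {\<phi> \<in> topspace (Ktop le). \<phi> x \<in> U}"
    proof (intro allI impI)
      fix U :: "real set" assume "openin euclideanreal U"
      then have "open U" by simp
      then show "openin (Ktop le) {\<phi> \<in> topspace (Ktop le). \<phi> x \<in> U}" by (rule coordU)
    qed
  qed
  have cid: "continuous_map (Ktop le) PT (\<lambda>\<phi>. \<phi>)"
    unfolding continuous_map_componentwise_UNIV using coord by blast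
  show ?thesis unfolding topology_eq
  proof (intro allI iffI)
    fix U assume "openin (Ktop le) U"
    then have g: "generate_topology_on S U" unfolding Kt openin_topology_generated_by_iff .
    show "openin (subtopology PT (Kset le)) U"
    proof (rule generate_topology_on_coarsest[OF _ _ g])
      show "istopology (openin (subtopology PT (Kset le)))" by simp
      fix T assume TS: "T \<in> S"
      have "\<exists>x V. T = {\<phi> \<in> Kset le. \<phi> x \<in> V} \<and> x \<in> Bd le \<and> open V"
        using TS by (simp only: S_def mem_Collect_eq)
      then obtain x V where T: "T = {\<phi> \<in> Kset le. \<phi> x \<in> V}" "open V" by auto
      have "openin PT {\<phi> \<in> topspace PT. \<phi> x \<in> V}"
        by (rule openin_continuous_map_preimage[OF PT_proj]) (use T(2) in simp)
      moreover have "T = {\<phi> \<in> topspace PT. \<phi> x \<in> V} \<inter> Kset le" using T by auto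
      ultimately show "openin (subtopology PT (Kset le)) T" unfolding openin_subtopology by blast
    qed
  next
    fix U assume "openin (subtopology PT (Kset le)) U"
    then obtain T where T: "openin PT T" "U = T \<inter> Kset le" unfolding openin_subtopology by blast
    have "openin (Ktop le) {\<phi> \<in> topspace (Ktop le). \<phi> \<in> T}"
      by (rule openin_continuous_map_preimage[OF cid T(1)])
    moreover have "{\<phi> \<in> topspace (Ktop le). \<phi> \<in> T} = U" unfolding top T(2) by auto
    ultimately show "openin (Ktop le) U" by simp
  qed
qed

lemma Ktop_compact: "compact_space (Ktop le)"
  unfolding Ktop_eq by (rule compact_space_subtopology[OF Kset_compactin])

lemma Ktop_Hausdorff: "Hausdorff_space (Ktop le)"
  unfolding Ktop_eq
  by (rule Hausdorff_space_subtopology) (simp add: Hausdorff_space_product_topology)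

end

theorem theorem27:
  fixes le :: "'a::comm_ring_1 \<Rightarrow> 'a \<Rightarrow> bool"
  assumes "po_comm_ring le"
    and "localizable le"
    and "\<forall>n::nat. n \<ge> 1 \<longrightarrow> of_nat n \<in> Loc le"
  shows "compact_space (Ktop le) \<and> Hausdorff_space (Ktop le) \<and>
         {r. gelfand_nonneg le r} = ddagger_pos le"
proof -
  interpret porng le using assms by (rule porng.intro)
  show ?thesis using Ktop_compact Ktop_Hausdorff gelfand_iff by blast
qed

end
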